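(* Let $\Gamma$ be an embedded (ribbon) graph and let $a,b$ be two distinct edges of $\Gamma$ such that an end of $a$ and an end of $b$ are neighbors in the cyclic order at some vertex. Let $\Gamma'_{ab}$ be the ribbon graph obtained from $\Gamma$ by exchanging these two neighboring ends. Then $D(\Gamma'_{ab})=D(\Gamma)'_{ab}$.
   Context: An embedded (ribbon) graph is a connected graph cellularly embedded in a compact surface, orientable or not (edges are ribbons; loops may be orientable or half-twisted). Its delta-matroid is $D(\Gamma)=(E(\Gamma);\Phi(\Gamma))$, where $\phi\subseteq E(\Gamma)$ is feasible iff the spanning ribbon subgraph with all vertices of $\Gamma$ and edge set $\phi$ has boundary consisting of exactly one connected component. For a set system $D=(E;\Phi)$ and distinct $a,b\in E$: the twist is $D*E'=(E;\{\phi\Delta E'\mid\phi\in\Phi\})$; the sliding of $a$ over $b$ is $\widetilde D_{ab}=(E;\Phi\,\Delta\,\{\phi\sqcup\{a\}\mid\phi\subseteq E\setminus\{a,b\},\ \phi\sqcup\{b\}\in\Phi\})$; and $D'_{ab}=\big(\widetilde{(D*\{b\})}_{ab}\big)*\{b\}$. *)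

theory Defs
  imports Main
begin

text \<open>Combinatorial model of embedded (ribbon) graphs, orientable or not:
  graph-encoded maps (gems). A map is a finite set of flags with three
  fixed-point-free involutions; \<open>r0\<close> changes the vertex (moves along the edge),
  \<open>r1\<close> changes the edge (corners at a vertex), \<open>r2\<close> changes the side of the
  edge (the two flags of a half-edge). Vertices are orbits of r1,r2; edges are
  orbits of r0,r2 (four flags each); faces are orbits of r0,r1.\<close>

record 'f rmap =
  flags :: "'f set"
  r0 :: "'f \<Rightarrow> 'f"
  r1 :: "'f \<Rightarrow> 'f"
  r2 :: "'f \<Rightarrow> 'f"

definition fpf_involution_on :: "'f set \<Rightarrow> ('f \<Rightarrow> 'f) \<Rightarrow> bool" where
  "fpf_involution_on F s \<longleftrightarrow> (\<forall>x\<in>F. s x \<in> F \<and> s (s x) = x \<and> s x \<noteq> x)"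

definition gen_rel :: "'f set \<Rightarrow> ('f \<Rightarrow> 'f) list \<Rightarrow> ('f \<times> 'f) set" where
  "gen_rel F gs = {(x, g x) | x g. x \<in> F \<and> g \<in> set gs}"

definition num_orbits :: "'f set \<Rightarrow> ('f \<Rightarrow> 'f) list \<Rightarrow> nat" where
  "num_orbits F gs = card (F // ((gen_rel F gs)\<^sup>*))"

definition ribbon_graph :: "('f, 'z) rmap_scheme \<Rightarrow> bool" where
  "ribbon_graph G \<longleftrightarrow>
     finite (flags G) \<and> flags G \<noteq> {} \<and>
     fpf_involution_on (flags G) (r0 G) \<and>
     fpf_involution_on (flags G) (r1 G) \<and>
     fpf_involution_on (flags G) (r2 G) \<and>
     (\<forall>x\<in>flags G. r0 G (r2 G x) = r2 G (r0 G x) \<and> r0 G (r2 G x) \<noteq> x) \<and>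
     num_orbits (flags G) [r0 G, r1 G, r2 G] = 1"

definition edge_of :: "('f, 'z) rmap_scheme \<Rightarrow> 'f \<Rightarrow> 'f set" where
  "edge_of G x = {x, r0 G x, r2 G x, r0 G (r2 G x)}"

definition edges :: "('f, 'z) rmap_scheme \<Rightarrow> 'f set set" where
  "edges G = edge_of G ` flags G"

text \<open>Boundary components of the spanning ribbon subgraph with edge set phi:
  at flags of deleted edges the boundary passes across the vertex disc (r2)
  instead of running along the edge (r0); isolated vertices give one
  component each.\<close>
definition sub_r0 :: "('f, 'z) rmap_scheme \<Rightarrow> 'f set set \<Rightarrow> 'f \<Rightarrow> 'f" where
  "sub_r0 G phi x = (if edge_of G x \<in> phi then r0 G x else r2 G x)"

definition num_boundary_components :: "('f, 'z) rmap_scheme \<Rightarrow> 'f set set \<Rightarrow> nat" where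
  "num_boundary_components G phi = num_orbits (flags G) [sub_r0 G phi, r1 G]"

type_synonym 'e set_system = "'e set \<times> 'e set set"

definition delta_matroid_of :: "('f, 'z) rmap_scheme \<Rightarrow> 'f set set_system" where
  "delta_matroid_of G =
     (edges G, {phi. phi \<subseteq> edges G \<and> num_boundary_components G phi = 1})"

definition symdiff :: "'a set \<Rightarrow> 'a set \<Rightarrow> 'a set" where
  "symdiff A B = (A - B) \<union> (B - A)"

definition twist :: "'e set_system \<Rightarrow> 'e set \<Rightarrow> 'e set_system" where
  "twist D E' = (fst D, (\<lambda>phi. symdiff phi E') ` snd D)"

definition slide :: "'e set_system \<Rightarrow> 'e \<Rightarrow> 'e \<Rightarrow> 'e set_system" where
  "slide D a b = (fst D, symdiff (snd D)
      {phi \<union> {a} | phi. phi \<subseteq> fst D - {a, b} \<and> phi \<union> {b} \<in> snd D})"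

definition Dprime :: "'e set_system \<Rightarrow> 'e \<Rightarrow> 'e \<Rightarrow> 'e set_system" where
  "Dprime D a b = twist (slide (twist D {b}) a b) {b}"

text \<open>Flag x lies on (the half-edge of) edge a and
  r1 x on edge b, so these ends are neighbours at the corner {x, r1 x}. Around
  the vertex the flags read  p | a1 a2 | b1 b2 | n  with a2 = x, b1 = r1 x,
  a1 = r2 x, b2 = r2 b1, p = r1 a1, n = r1 b2. Sliding the end of a past the end
  of b along the vertex boundary gives  p | b1 b2 | a1 a2 | n. If the vertex has
  only these two ends (n = a1) the cyclic order is unchanged.\<close>
definition exchange_r1 :: "('f, 'z) rmap_scheme \<Rightarrow> 'f \<Rightarrow> 'f \<Rightarrow> 'f" where
  "exchange_r1 G x =
    (let a2 = x; b1 = r1 G x; a1 = r2 G x; b2 = r2 G b1;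
         p = r1 G a1; n = r1 G b2 in
     if n = a1 then r1 G
     else (\<lambda>y. if y = p then b1 else if y = b1 then p
              else if y = b2 then a1 else if y = a1 then b2
              else if y = a2 then n else if y = n then a2
              else r1 G y))"

definition exchange_ends :: "('f, 'z) rmap_scheme \<Rightarrow> 'f \<Rightarrow> ('f, 'z) rmap_scheme" where
  "exchange_ends G x = G\<lparr>r1 := exchange_r1 G x\<rparr>"

end

theory Submission
  imports Defs
begin


definition conn :: "'a set \<Rightarrow> ('a \<times> 'a) set \<Rightarrow> bool" where
  "conn A R \<longleftrightarrow> (\<forall>x\<in>A. \<forall>y\<in>A. (x,y) \<in> R\<^sup>*)"

lemma card_quot_one:
  assumes "A \<noteq> {}"
  shows "card (A // R\<^sup>*) = 1 \<longleftrightarrow> conn A R"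
proof
  assume c: "card (A // R\<^sup>*) = 1"
  then obtain X where X: "A // R\<^sup>* = {X}" by (meson card_1_singletonE)
  have cl: "R\<^sup>* `` {x} = X" if "x \<in> A" for x
  proof -
    have "R\<^sup>* `` {x} \<in> A // R\<^sup>*" using that by (rule quotientI)
    then show ?thesis using X by simp
  qed
  show "conn A R" unfolding conn_def
  proof (intro ballI)
    fix x y assume xy: "x \<in> A" "y \<in> A"
    have "y \<in> R\<^sup>* `` {y}" by simp
    then have "y \<in> R\<^sup>* `` {x}" using cl xy by simp
    then show "(x,y) \<in> R\<^sup>*" by simp
  qed
next
  assume c: "conn A R"
  obtain x0 where x0: "x0 \<in> A" using assms by blast
  have eq: "R\<^sup>* `` {x} = R\<^sup>* `` {x0}" if x: "x \<in> A" for x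
  proof -
    have 1: "(x,x0) \<in> R\<^sup>*" "(x0,x) \<in> R\<^sup>*" using c x x0 unfolding conn_def by blast+
    show "R\<^sup>* `` {x} = R\<^sup>* `` {x0}"
    proof
      show "R\<^sup>* `` {x} \<subseteq> R\<^sup>* `` {x0}" using 1(2) by (blast intro: rtrancl_trans)
      show "R\<^sup>* `` {x0} \<subseteq> R\<^sup>* `` {x}" using 1(1) by (blast intro: rtrancl_trans)
    qed
  qed
  have "A // R\<^sup>* = {R\<^sup>* `` {x0}}"
  proof
    show "A // R\<^sup>* \<subseteq> {R\<^sup>* `` {x0}}" using eq by (auto elim!: quotientE)
    show "{R\<^sup>* `` {x0}} \<subseteq> A // R\<^sup>*" using x0 by (simp add: quotientI)
  qed
  then show "card (A // R\<^sup>*) = 1" by simp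
qed
lemma finite_quotient': "finite A \<Longrightarrow> finite (A // r)"
  unfolding quotient_def by auto

lemma insert_edge_rtrancl:
  assumes sym: "sym R"
  shows "(R \<union> {(x,y),(y,x)})\<^sup>* \<subseteq> R\<^sup>* \<union> (R\<^sup>*``{x} \<union> R\<^sup>*``{y}) \<times> (R\<^sup>*``{x} \<union> R\<^sup>*``{y})"
proof
  fix p assume "p \<in> (R \<union> {(x,y),(y,x)})\<^sup>*"
  then obtain z w where p: "p = (z,w)" and zw: "(z,w) \<in> (R \<union> {(x,y),(y,x)})\<^sup>*" by (cases p) auto
  have symR: "sym (R\<^sup>*)" using sym by (simp add: sym_rtrancl)
  from zw have "(z,w) \<in> R\<^sup>* \<union> (R\<^sup>*``{x} \<union> R\<^sup>*``{y}) \<times> (R\<^sup>*``{x} \<union> R\<^sup>*``{y})"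
  proof (induction rule: rtrancl_induct)
    case base then show ?case by auto
  next
    case (step u v)
    from step.hyps(2) show ?case
    proof
      assume uv: "(u,v) \<in> R"
      from step.IH show ?case
      proof
        assume "(z,u) \<in> R\<^sup>*" then show ?case using uv by (blast intro: rtrancl_into_rtrancl)
      next
        assume "(z,u) \<in> (R\<^sup>*``{x} \<union> R\<^sup>*``{y}) \<times> (R\<^sup>*``{x} \<union> R\<^sup>*``{y})"
        then show ?case using uv by (auto intro: rtrancl_into_rtrancl)
      qed
    next
      assume uv: "(u,v) \<in> {(x,y),(y,x)}"
      from step.IH show ?case
      proof
        assume zu: "(z,u) \<in> R\<^sup>*"
        then have uz: "(u,z) \<in> R\<^sup>*" using symR by (meson symD)
        from uv show ?case
        proof
          assume "(u,v) = (x,y)" then show ?case using uz by blast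
        next
          assume "(u,v) \<in> {(y,x)}" then show ?case using uz by blast
        qed
      next
        assume "(z,u) \<in> (R\<^sup>*``{x} \<union> R\<^sup>*``{y}) \<times> (R\<^sup>*``{x} \<union> R\<^sup>*``{y})"
        then show ?case using uv by blast
      qed
    qed
  qed
  then show "p \<in> R\<^sup>* \<union> (R\<^sup>*``{x} \<union> R\<^sup>*``{y}) \<times> (R\<^sup>*``{x} \<union> R\<^sup>*``{y})" using p by simp
qed

lemma class_eq:
  assumes "sym S" "trans S" "(x,z) \<in> S" shows "S``{z} = S``{x}"
proof
  show "S``{z} \<subseteq> S``{x}"
  proof
    fix u assume "u \<in> S``{z}" then have "(z,u) \<in> S" by simp
    then have "(x,u) \<in> S" using assms(2,3) by (meson transD)
    then show "u \<in> S``{x}" by simp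
  qed
  show "S``{x} \<subseteq> S``{z}"
  proof
    fix u assume "u \<in> S``{x}" then have "(x,u) \<in> S" by simp
    moreover have "(z,x) \<in> S" using assms(1,3) by (meson symD)
    ultimately have "(z,u) \<in> S" using assms(2) by (meson transD)
    then show "u \<in> S``{z}" by simp
  qed
qed

lemma insert_edge_card:
  assumes sym: "sym R" and fin: "finite A" and x: "x \<in> A"
  shows "card (A // R\<^sup>*) \<le> card (A // (R \<union> {(x,y),(y,x)})\<^sup>*) + 1"
proof -
  let ?R' = "R \<union> {(x,y),(y,x)}"
  define phi where "phi = (\<lambda>X. ?R'\<^sup>* `` X)"
  have symR: "sym (R\<^sup>*)" using sym by (simp add: sym_rtrancl)
  have trR: "trans (R\<^sup>*)" by (rule trans_rtrancl)
  have RR': "R\<^sup>* \<subseteq> ?R'\<^sup>*" by (rule rtrancl_mono) blast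
  have RRz: "\<And>z. ?R'\<^sup>* `` (R\<^sup>*``{z}) = ?R'\<^sup>*``{z}"
  proof -
    fix z
    show "?R'\<^sup>* `` (R\<^sup>*``{z}) = ?R'\<^sup>*``{z}"
    proof
      show "?R'\<^sup>* `` (R\<^sup>*``{z}) \<subseteq> ?R'\<^sup>*``{z}"
      proof
        fix u assume "u \<in> ?R'\<^sup>* `` (R\<^sup>*``{z})"
        then obtain v where "(z,v) \<in> R\<^sup>*" "(v,u) \<in> ?R'\<^sup>*" by blast
        then have "(z,v) \<in> ?R'\<^sup>*" "(v,u) \<in> ?R'\<^sup>*" using RR' by auto
        then have "(z,u) \<in> ?R'\<^sup>*" by (rule rtrancl_trans)
        then show "u \<in> ?R'\<^sup>*``{z}" by simp
      qed
      show "?R'\<^sup>*``{z} \<subseteq> ?R'\<^sup>* `` (R\<^sup>*``{z})" by blast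
    qed
  qed
  have fq: "finite (A // R\<^sup>*)" using fin by (simp add: finite_quotient')
  have inj: "inj_on phi (A // R\<^sup>* - {R\<^sup>*``{x}})"
  proof (rule inj_onI)
    fix X Y assume X: "X \<in> A // R\<^sup>* - {R\<^sup>*``{x}}" and Y: "Y \<in> A // R\<^sup>* - {R\<^sup>*``{x}}"
      and eq: "phi X = phi Y"
    obtain z where z: "z \<in> A" "X = R\<^sup>*``{z}" using X by (blast elim: quotientE)
    obtain w where w: "w \<in> A" "Y = R\<^sup>*``{w}" using Y by (blast elim: quotientE)
    have "w \<in> ?R'\<^sup>*``{w}" by blast
    then have "w \<in> ?R'\<^sup>*``{z}" using eq z w RRz unfolding phi_def by simp
    then have "(z,w) \<in> ?R'\<^sup>*" by simp
    then have cases: "(z,w) \<in> R\<^sup>* \<or> (z \<in> R\<^sup>*``{x} \<union> R\<^sup>*``{y} \<and> w \<in> R\<^sup>*``{x} \<union> R\<^sup>*``{y})"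
      using insert_edge_rtrancl[OF sym, of x y] by blast
    have zx: "(x,z) \<notin> R\<^sup>*"
    proof
      assume "(x,z) \<in> R\<^sup>*"
      then have "R\<^sup>*``{z} = R\<^sup>*``{x}" using class_eq[OF symR trR] by blast
      then show False using X z by simp
    qed
    have wx: "(x,w) \<notin> R\<^sup>*"
    proof
      assume "(x,w) \<in> R\<^sup>*"
      then have "R\<^sup>*``{w} = R\<^sup>*``{x}" using class_eq[OF symR trR] by blast
      then show False using Y w by simp
    qed
    from cases have "(z,w) \<in> R\<^sup>*"
    proof
      assume "z \<in> R\<^sup>*``{x} \<union> R\<^sup>*``{y} \<and> w \<in> R\<^sup>*``{x} \<union> R\<^sup>*``{y}"
      then have "(y,z) \<in> R\<^sup>*" "(y,w) \<in> R\<^sup>*" using zx wx by blast+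
      then show "(z,w) \<in> R\<^sup>*" using symR trR by (meson symD transD)
    qed
    then have "R\<^sup>*``{w} = R\<^sup>*``{z}" by (rule class_eq[OF symR trR])
    then show "X = Y" using z w by simp
  qed
  have sub: "phi ` (A // R\<^sup>* - {R\<^sup>*``{x}}) \<subseteq> A // ?R'\<^sup>*"
  proof
    fix Z assume "Z \<in> phi ` (A // R\<^sup>* - {R\<^sup>*``{x}})"
    then obtain z where z: "z \<in> A" "Z = phi (R\<^sup>*``{z})" by (blast elim: quotientE)
    then have "Z = ?R'\<^sup>*``{z}" using RRz unfolding phi_def by simp
    then show "Z \<in> A // ?R'\<^sup>*" using z by (simp add: quotientI)
  qed
  have fq': "finite (A // ?R'\<^sup>*)" using fin by (simp add: finite_quotient')
  have "card (A // R\<^sup>* - {R\<^sup>*``{x}}) = card (phi ` (A // R\<^sup>* - {R\<^sup>*``{x}}))"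
    using inj by (simp add: card_image)
  also have "\<dots> \<le> card (A // ?R'\<^sup>*)" using sub fq' by (simp add: card_mono)
  finally have "card (A // R\<^sup>* - {R\<^sup>*``{x}}) \<le> card (A // ?R'\<^sup>*)" .
  moreover have "card (A // R\<^sup>*) \<le> card (A // R\<^sup>* - {R\<^sup>*``{x}}) + 1"
  proof (cases "R\<^sup>*``{x} \<in> A // R\<^sup>*")
    case True then show ?thesis using fq by (simp add: card_Diff_singleton)
  next
    case False then show ?thesis by simp
  qed
  ultimately show ?thesis by simp
qed


definition erel :: "'a set set \<Rightarrow> ('a \<times> 'a) set" where
  "erel E = {(x,y). {x,y} \<in> E}"

lemma sym_erel: "sym (erel E)"
  unfolding erel_def sym_def by (simp add: insert_commute)

lemma erel_insert: "erel (insert {x,y} E) = erel E \<union> {(x,y),(y,x)}"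
  unfolding erel_def by (auto simp: doubleton_eq_iff)

lemma quotient_Id_card:
  assumes "finite A" shows "card (A // ({}::('a\<times>'a) set)\<^sup>*) = card A"
proof -
  have "A // ({}::('a\<times>'a) set)\<^sup>* = (\<lambda>x. {x}) ` A"
    unfolding quotient_def by auto
  then show ?thesis by (simp add: card_image)
qed

lemma comps_bound:
  assumes "finite E" "finite A" "\<forall>e\<in>E. \<exists>x y. e = {x,y} \<and> x \<in> A"
  shows "card A \<le> card (A // (erel E)\<^sup>*) + card E"
  using assms(1,3)
proof (induction E rule: finite_induct)
  case empty
  have "erel {} = {}" unfolding erel_def by simp
  then have "card (A // (erel {})\<^sup>*) = card A" using quotient_Id_card[OF assms(2)] by metis
  then show ?case by simp
next
  case (insert e E)
  then obtain x y where e: "e = {x,y}" "x \<in> A" by blast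
  have IH: "card A \<le> card (A // (erel E)\<^sup>*) + card E" using insert by blast
  have "card (A // (erel E)\<^sup>*) \<le> card (A // (erel E \<union> {(x,y),(y,x)})\<^sup>*) + 1"
    by (rule insert_edge_card[OF sym_erel assms(2) e(2)])
  moreover have "erel (insert e E) = erel E \<union> {(x,y),(y,x)}" using e(1) erel_insert by simp
  ultimately show ?case using IH insert(1,2) by (simp add: card_insert_if)
qed

lemma fpf_pairs_card:
  assumes "finite D" "\<forall>x\<in>D. f x \<in> D \<and> f (f x) = x \<and> f x \<noteq> x"
  shows "card D = 2 * card ((\<lambda>x. {x, f x}) ` D)"
  using assms
proof (induction "card D" arbitrary: D rule: less_induct)
  case less
  show ?case
  proof (cases "D = {}")
    case True then show ?thesis by simp
  next
    case False
    then obtain x where x: "x \<in> D" by blast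
    define D' where "D' = D - {x, f x}"
    have fx: "f x \<in> D" "f x \<noteq> x" "f (f x) = x" using less.prems x by auto
    have sub2: "{x, f x} \<subseteq> D" using fx x by simp
    have c2: "card {x, f x} = 2" using fx by simp
    have cD: "card D = card D' + 2" using card_Diff_subset[OF _ sub2] c2 card_mono[OF less.prems(1) sub2]
      less.prems(1) unfolding D'_def by simp
    have pD': "\<forall>z\<in>D'. f z \<in> D' \<and> f (f z) = z \<and> f z \<noteq> z"
      unfolding D'_def using less.prems(2) fx by (metis Diff_iff insertCI insertE singleton_iff)
    have IH: "card D' = 2 * card ((\<lambda>x. {x, f x}) ` D')"
      using less.hyps[of D'] cD pD' less.prems(1) unfolding D'_def by simp
    have img: "(\<lambda>x. {x, f x}) ` D = insert {x, f x} ((\<lambda>x. {x, f x}) ` D')"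
    proof
      show "(\<lambda>x. {x, f x}) ` D \<subseteq> insert {x, f x} ((\<lambda>x. {x, f x}) ` D')"
      proof
        fix e assume "e \<in> (\<lambda>x. {x, f x}) ` D"
        then obtain z where z: "z \<in> D" "e = {z, f z}" by blast
        show "e \<in> insert {x, f x} ((\<lambda>x. {x, f x}) ` D')"
        proof (cases "z = x \<or> z = f x")
          case True then show ?thesis using z fx by auto
        next
          case False then show ?thesis using z unfolding D'_def by auto
        qed
      qed
      show "insert {x, f x} ((\<lambda>x. {x, f x}) ` D') \<subseteq> (\<lambda>x. {x, f x}) ` D"
        using x unfolding D'_def by auto
    qed
    have notin: "{x, f x} \<notin> (\<lambda>x. {x, f x}) ` D'"
    proof
      assume "{x, f x} \<in> (\<lambda>x. {x, f x}) ` D'"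
      then obtain z where "z \<in> D'" "{x, f x} = {z, f z}" by blast
      then show False unfolding D'_def by (auto simp: doubleton_eq_iff)
    qed
    have fin: "finite ((\<lambda>x. {x, f x}) ` D')" using less.prems(1) unfolding D'_def by simp
    show ?thesis using IH cD img notin fin by simp
  qed
qed

lemma stub_bound:
  fixes C Cs Ct :: "'a set" and s t :: "'a \<Rightarrow> 'a"
  assumes fin: "finite C" and sub: "Cs \<subseteq> C" "Ct \<subseteq> C"
    and invs: "\<forall>x\<in>Cs. s x \<in> Cs \<and> s (s x) = x \<and> s x \<noteq> x"
    and invt: "\<forall>x\<in>Ct. t x \<in> Ct \<and> t (t x) = x \<and> t x \<noteq> x"
    and cn: "conn C (erel ((\<lambda>x. {x, s x}) ` Cs \<union> (\<lambda>x. {x, t x}) ` Ct))"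
  shows "2 * card C \<le> card Cs + card Ct + 2" "even (card Cs)" "even (card Ct)"
proof -
  let ?E = "(\<lambda>x. {x, s x}) ` Cs \<union> (\<lambda>x. {x, t x}) ` Ct"
  have fs: "finite Cs" "finite Ct" using fin sub finite_subset by auto
  have cs: "card Cs = 2 * card ((\<lambda>x. {x, s x}) ` Cs)" by (rule fpf_pairs_card[OF fs(1) invs])
  have ct: "card Ct = 2 * card ((\<lambda>x. {x, t x}) ` Ct)" by (rule fpf_pairs_card[OF fs(2) invt])
  show "even (card Cs)" "even (card Ct)" using cs ct by simp_all
  show "2 * card C \<le> card Cs + card Ct + 2"
  proof (cases "C = {}")
    case True then show ?thesis by simp
  next
    case False
    have q1: "card (C // (erel ?E)\<^sup>*) = 1" using card_quot_one[OF False] cn by simp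
    have fE: "finite ?E" using fs by simp
    have eE: "\<forall>e\<in>?E. \<exists>x y. e = {x,y} \<and> x \<in> C" using sub by blast
    have "card C \<le> card (C // (erel ?E)\<^sup>*) + card ?E" by (rule comps_bound[OF fE fin eE])
    also have "card ?E \<le> card ((\<lambda>x. {x, s x}) ` Cs) + card ((\<lambda>x. {x, t x}) ` Ct)"
      by (rule card_Un_le)
    finally show ?thesis using q1 cs ct by simp
  qed
qed


lemma proj_conn:
  assumes F0: "F0 \<subseteq> F" and fF: "\<forall>x\<in>F. f x \<in> F0" and fid: "\<forall>x\<in>F0. f x = x"
    and edge: "\<forall>x y. (x,y) \<in> R \<longrightarrow> (f x, f y) \<in> Q\<^sup>*"
    and QR: "Q \<subseteq> R\<^sup>*"
    and bk: "\<forall>x\<in>F. (x, f x) \<in> R\<^sup>* \<and> (f x, x) \<in> R\<^sup>*"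
  shows "conn F R \<longleftrightarrow> conn F0 Q"
proof
  assume c: "conn F R"
  show "conn F0 Q" unfolding conn_def
  proof (intro ballI)
    fix x y assume x: "x \<in> F0" and y: "y \<in> F0"
    have "(x,y) \<in> R\<^sup>*" using c x y F0 unfolding conn_def by blast
    then have "(f x, f y) \<in> Q\<^sup>*"
    proof (induction rule: rtrancl_induct)
      case base then show ?case by simp
    next
      case (step u v)
      then have "(f u, f v) \<in> Q\<^sup>*" using edge by blast
      then show ?case using step.IH by (rule rtrancl_trans[rotated])
    qed
    then show "(x,y) \<in> Q\<^sup>*" using fid x y by simp
  qed
next
  assume c: "conn F0 Q"
  have QR': "Q\<^sup>* \<subseteq> R\<^sup>*"
  proof -
    have "Q\<^sup>* \<subseteq> (R\<^sup>*)\<^sup>*" using QR by (rule rtrancl_mono)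
    then show ?thesis by simp
  qed
  show "conn F R" unfolding conn_def
  proof (intro ballI)
    fix x y assume x: "x \<in> F" and y: "y \<in> F"
    have 1: "(x, f x) \<in> R\<^sup>*" using bk x by blast
    have 2: "(f y, y) \<in> R\<^sup>*" using bk y by blast
    have "(f x, f y) \<in> Q\<^sup>*" using c fF x y unfolding conn_def by blast
    then have 3: "(f x, f y) \<in> R\<^sup>*" using QR' by blast
    show "(x,y) \<in> R\<^sup>*" using 1 2 3 by (meson rtrancl_trans)
  qed
qed

datatype lab = LP | LN | LA1 | LA2 | LB1 | LB2

lemma UNIV_lab: "(UNIV :: lab set) = {LP, LN, LA1, LA2, LB1, LB2}"
  using lab.exhaust by auto

lemma card_lab: "card (UNIV :: lab set) = 6"
  unfolding UNIV_lab by simp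

lemma finite_lab: "finite (UNIV :: lab set)"
  unfolding UNIV_lab by simp

lemma lab_conn:
  fixes \<pi> m :: "lab \<Rightarrow> lab"
  assumes pi: "\<forall>l. \<pi> l \<noteq> l \<and> \<pi> (\<pi> l) = l" and m: "\<forall>l. m l \<noteq> l \<and> m (m l) = l"
    and d: "\<forall>l. m l \<noteq> \<pi> l"
  shows "(l, l') \<in> ({(l, \<pi> l) | l. True} \<union> {(l, m l) | l. True})\<^sup>*"
proof -
  let ?L = "{(l, \<pi> l) | l. True} \<union> {(l, m l) | l. True}"
  define S where "S = ?L\<^sup>* `` {l}"
  have Spi: "\<pi> y \<in> S" if "y \<in> S" for y
  proof -
    have "(y, \<pi> y) \<in> ?L" by blast
    then show ?thesis using that unfolding S_def by (meson Image_singleton_iff rtrancl_into_rtrancl)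
  qed
  have Sm: "m y \<in> S" if "y \<in> S" for y
  proof -
    have "(y, m y) \<in> ?L" by blast
    then show ?thesis using that unfolding S_def by (meson Image_singleton_iff rtrancl_into_rtrancl)
  qed
  have lS: "l \<in> S" unfolding S_def by simp
  show ?thesis
  proof (rule ccontr)
    assume "(l, l') \<notin> ?L\<^sup>*"
    then have l'S: "l' \<notin> S" unfolding S_def by simp
    have Tpi: "\<pi> y \<notin> S" if "y \<notin> S" for y using Spi pi that by metis
    have Tm: "m y \<notin> S" if "y \<notin> S" for y using Sm m that by metis
    define x1 where "x1 = m l"
    define x2 where "x2 = \<pi> x1"
    define x3 where "x3 = m x2"
    have inS: "{l, x1, x2, x3} \<subseteq> S" using lS Sm Spi unfolding x1_def x2_def x3_def by blast
    have n01: "l \<noteq> x1" using m unfolding x1_def by metis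
    have n12: "x1 \<noteq> x2" using pi unfolding x2_def by metis
    have n23: "x2 \<noteq> x3" using m unfolding x3_def by metis
    have n02: "l \<noteq> x2" using d m unfolding x2_def x1_def by metis
    have n13: "x1 \<noteq> x3" using m n02 unfolding x3_def x1_def by metis
    have n03: "l \<noteq> x3" using m n12 unfolding x3_def x1_def by metis
    have d4: "card {l, x1, x2, x3} = 4" using n01 n12 n23 n02 n13 n03 by simp
    have inT: "{l', \<pi> l', m l'} \<subseteq> UNIV - S" using l'S Tpi Tm by blast
    have e1: "l' \<noteq> \<pi> l'" "l' \<noteq> m l'" "\<pi> l' \<noteq> m l'" using pi m d by metis+
    have d3: "card {l', \<pi> l', m l'} = 3" using e1 by simp
    have "card S + card (UNIV - S) = 6" using card_lab finite_lab
      by (metis card_Un_disjoint Diff_disjoint Un_Diff_cancel Un_UNIV_right finite_Diff finite_subset subset_UNIV)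
    moreover have "4 \<le> card S" using inS d4 finite_lab by (metis card_mono finite_subset subset_UNIV)
    moreover have "3 \<le> card (UNIV - S)" using inT d3 finite_lab by (metis card_mono finite_subset subset_UNIV)
    ultimately show False by simp
  qed
qed


lemma KM_conn:
  fixes K :: "('a \<times> 'a) set" and vert :: "lab \<Rightarrow> 'a" and \<pi> m :: "lab \<Rightarrow> lab"
  assumes symK: "sym K" and vertF: "\<forall>l. vert l \<in> F0"
    and pi: "\<forall>l. \<pi> l \<noteq> l \<and> \<pi> (\<pi> l) = l" and m: "\<forall>l. m l \<noteq> l \<and> m (m l) = l"
    and piK: "\<forall>l l'. (vert l, vert l') \<in> K\<^sup>* \<longleftrightarrow> (l' = l \<or> l' = \<pi> l)"
  shows "conn F0 (K \<union> {(vert l, vert (m l)) | l. True}) \<longleftrightarrow>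
           (\<forall>v\<in>F0. \<exists>l. (v, vert l) \<in> K\<^sup>*) \<and> (\<forall>l. m l \<noteq> \<pi> l)"
proof -
  let ?M = "{(vert l, vert (m l)) | l. True}"
  let ?Q = "K \<union> ?M"
  have symKs: "sym (K\<^sup>*)" using symK by (simp add: sym_rtrancl)
  have KQ: "K\<^sup>* \<subseteq> ?Q\<^sup>*" by (rule rtrancl_mono) blast
  show ?thesis
  proof
    assume c: "conn F0 ?Q"
    have part1: "\<forall>v\<in>F0. \<exists>l. (v, vert l) \<in> K\<^sup>*"
    proof
      fix v assume v: "v \<in> F0"
      have "(vert LP, v) \<in> ?Q\<^sup>*" using c v vertF unfolding conn_def by blast
      then show "\<exists>l. (v, vert l) \<in> K\<^sup>*"
      proof (induction rule: rtrancl_induct)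
        case base then show ?case by blast
      next
        case (step y z)
        then obtain l where l: "(y, vert l) \<in> K\<^sup>*" by blast
        from step.hyps(2) show ?case
        proof
          assume "(y,z) \<in> K"
          then have "(z,y) \<in> K" using symK by (meson symD)
          then show ?case using l by (meson converse_rtrancl_into_rtrancl)
        next
          assume "(y,z) \<in> ?M"
          then obtain k where "z = vert (m k)" by blast
          then show ?case by blast
        qed
      qed
    qed
    have part2: "\<forall>l. m l \<noteq> \<pi> l"
    proof (rule ccontr)
      assume "\<not> (\<forall>l. m l \<noteq> \<pi> l)"
      then obtain i where mi: "m i = \<pi> i" by blast
      define Cl where "Cl = {y. \<exists>l\<in>{i, \<pi> i}. (y, vert l) \<in> K\<^sup>*}"
      have closed: "y \<in> Cl" if "(vert i, y) \<in> ?Q\<^sup>*" for y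
        using that
      proof (induction rule: rtrancl_induct)
        case base then show ?case unfolding Cl_def by blast
      next
        case (step y z)
        then obtain l where l: "l \<in> {i, \<pi> i}" "(y, vert l) \<in> K\<^sup>*" unfolding Cl_def by blast
        from step.hyps(2) show ?case
        proof
          assume "(y,z) \<in> K"
          then have "(z,y) \<in> K" using symK by (meson symD)
          then have "(z, vert l) \<in> K\<^sup>*" using l by (meson converse_rtrancl_into_rtrancl)
          then show ?case using l unfolding Cl_def by blast
        next
          assume "(y,z) \<in> ?M"
          then obtain k where yk: "y = vert k" "z = vert (m k)" by blast
          have "l = k \<or> l = \<pi> k" using piK l yk by blast
          then have "k = l \<or> k = \<pi> l" using pi by metis
          then have "k \<in> {i, \<pi> i}" using l pi by auto
          then have "m k \<in> {i, \<pi> i}"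
          proof
            assume "k = i" then show ?thesis using mi by simp
          next
            assume "k \<in> {\<pi> i}" then have "k = m i" using mi by simp
            then show ?thesis using m by simp
          qed
          then show ?case using yk unfolding Cl_def by blast
        qed
      qed
      obtain l0 where l0: "l0 \<noteq> i" "l0 \<noteq> \<pi> i"
      proof -
        have "\<exists>l0. l0 \<noteq> i \<and> l0 \<noteq> \<pi> i"
          by (metis lab.distinct(1) lab.distinct(3) lab.distinct(11))
        then show ?thesis using that by blast
      qed
      have "(vert i, vert l0) \<in> ?Q\<^sup>*" using c vertF unfolding conn_def by blast
      then have "vert l0 \<in> Cl" by (rule closed)
      then obtain l where l: "l \<in> {i, \<pi> i}" "(vert l0, vert l) \<in> K\<^sup>*" unfolding Cl_def by blast
      then have "l = l0 \<or> l = \<pi> l0" using piK by blast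
      then have "l0 = l \<or> l0 = \<pi> l" using pi by metis
      then show False using l l0 pi by auto
    qed
    show "(\<forall>v\<in>F0. \<exists>l. (v, vert l) \<in> K\<^sup>*) \<and> (\<forall>l. m l \<noteq> \<pi> l)" using part1 part2 by blast
  next
    assume h: "(\<forall>v\<in>F0. \<exists>l. (v, vert l) \<in> K\<^sup>*) \<and> (\<forall>l. m l \<noteq> \<pi> l)"
    let ?L = "{(l, \<pi> l) | l. True} \<union> {(l, m l) | l. True}"
    have labQ: "(vert l, vert l') \<in> ?Q\<^sup>*" for l l'
    proof -
      have "(l, l') \<in> ?L\<^sup>*" using lab_conn[OF pi m] h by blast
      then show ?thesis
      proof (induction rule: rtrancl_induct)
        case base then show ?case by simp
      next
        case (step y z)
        have "(vert y, vert z) \<in> ?Q\<^sup>*"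
        proof (cases "z = \<pi> y")
          case True
          then have "(vert y, vert z) \<in> K\<^sup>*" using piK by blast
          then show ?thesis using KQ by blast
        next
          case False
          then have "z = m y" using step.hyps(2) by blast
          then have "(vert y, vert z) \<in> ?Q" by blast
          then show ?thesis by blast
        qed
        then show ?case using step.IH by (rule rtrancl_trans[rotated])
      qed
    qed
    show "conn F0 ?Q" unfolding conn_def
    proof (intro ballI)
      fix x y assume x: "x \<in> F0" and y: "y \<in> F0"
      obtain lx where lx: "(x, vert lx) \<in> K\<^sup>*" using h x by blast
      obtain ly where ly: "(y, vert ly) \<in> K\<^sup>*" using h y by blast
      have ly': "(vert ly, y) \<in> K\<^sup>*" using ly symKs by (meson symD)
      have "(x, vert lx) \<in> ?Q\<^sup>*" "(vert ly, y) \<in> ?Q\<^sup>*" using lx ly' KQ by blast+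
      then show "(x,y) \<in> ?Q\<^sup>*" using labQ[of lx ly] by (meson rtrancl_trans)
    qed
  qed
qed

fun m1 :: "lab \<Rightarrow> lab" where
  "m1 LP = LA1" | "m1 LA1 = LP" | "m1 LA2 = LB1" | "m1 LB1 = LA2" | "m1 LB2 = LN" | "m1 LN = LB2"
fun m2 :: "lab \<Rightarrow> lab" where
  "m2 LP = LB1" | "m2 LB1 = LP" | "m2 LB2 = LA1" | "m2 LA1 = LB2" | "m2 LA2 = LN" | "m2 LN = LA2"
fun m3 :: "lab \<Rightarrow> lab" where
  "m3 LP = LN" | "m3 LN = LP" | "m3 LA1 = LA2" | "m3 LA2 = LA1" | "m3 LB1 = LB2" | "m3 LB2 = LB1"

lemma m_inv: "\<forall>l. m1 l \<noteq> l \<and> m1 (m1 l) = l" "\<forall>l. m2 l \<noteq> l \<and> m2 (m2 l) = l"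
   "\<forall>l. m3 l \<noteq> l \<and> m3 (m3 l) = l"
  by (auto intro!: allI, (case_tac l; simp)+)

lemma xor_check:
  fixes \<pi> :: "lab \<Rightarrow> lab"
  assumes pi: "\<forall>l. \<pi> l \<noteq> l \<and> \<pi> (\<pi> l) = l"
  shows "(\<forall>l. m2 l \<noteq> \<pi> l) \<longleftrightarrow> ((\<forall>l. m1 l \<noteq> \<pi> l) \<noteq> (\<forall>l. m3 l \<noteq> \<pi> l))"
proof -
  have e: "(\<forall>l. f l \<noteq> \<pi> l) \<longleftrightarrow> f LP \<noteq> \<pi> LP \<and> f LN \<noteq> \<pi> LN \<and> f LA1 \<noteq> \<pi> LA1 \<and> f LA2 \<noteq> \<pi> LA2 \<and> f LB1 \<noteq> \<pi> LB1 \<and> f LB2 \<noteq> \<pi> LB2" for f :: "lab \<Rightarrow> lab"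
    by (metis lab.exhaust)
  have p: "\<pi> LP \<noteq> LP" "\<pi> LN \<noteq> LN" "\<pi> LA1 \<noteq> LA1" "\<pi> LA2 \<noteq> LA2" "\<pi> LB1 \<noteq> LB1" "\<pi> LB2 \<noteq> LB2"
    "\<pi> (\<pi> LP) = LP" "\<pi> (\<pi> LN) = LN" "\<pi> (\<pi> LA1) = LA1" "\<pi> (\<pi> LA2) = LA2" "\<pi> (\<pi> LB1) = LB1" "\<pi> (\<pi> LB2) = LB2"
    using pi by auto
  show ?thesis unfolding e
    using p by (cases "\<pi> LP"; simp_all; cases "\<pi> LN"; simp_all; cases "\<pi> LA1"; simp_all;
      cases "\<pi> LA2"; simp_all; cases "\<pi> LB1"; simp_all; cases "\<pi> LB2"; simp_all)
qed


lemma rg_basic: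
  assumes "ribbon_graph G" "y \<in> flags G"
  shows "r0 G y \<in> flags G" "r0 G (r0 G y) = y" "r0 G y \<noteq> y"
    "r1 G y \<in> flags G" "r1 G (r1 G y) = y" "r1 G y \<noteq> y"
    "r2 G y \<in> flags G" "r2 G (r2 G y) = y" "r2 G y \<noteq> y"
    "r0 G (r2 G y) = r2 G (r0 G y)" "r0 G (r2 G y) \<noteq> y"
  using assms unfolding ribbon_graph_def fpf_involution_on_def by auto

lemma r0r2r0:
  assumes "ribbon_graph G" "y \<in> flags G"
  shows "r0 G (r2 G (r0 G y)) = r2 G y" "r2 G (r0 G (r2 G y)) = r0 G y"
proof -
  have "r2 G (r0 G y) = r0 G (r2 G y)" using rg_basic[OF assms] by simp
  then show "r0 G (r2 G (r0 G y)) = r2 G y" using rg_basic[OF assms(1) rg_basic(7)[OF assms]] by simp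
  have "r0 G (r2 G y) = r2 G (r0 G y)" using rg_basic[OF assms] by simp
  then show "r2 G (r0 G (r2 G y)) = r0 G y" using rg_basic[OF assms(1) rg_basic(1)[OF assms]] by simp
qed

lemma edge_of_r0:
  assumes "ribbon_graph G" "y \<in> flags G" shows "edge_of G (r0 G y) = edge_of G y"
  using rg_basic[OF assms] r0r2r0[OF assms] unfolding edge_of_def by auto

lemma edge_of_r2:
  assumes "ribbon_graph G" "y \<in> flags G" shows "edge_of G (r2 G y) = edge_of G y"
  using rg_basic[OF assms] r0r2r0[OF assms] unfolding edge_of_def by auto

lemma sub_r0_inv:
  assumes "ribbon_graph G" "y \<in> flags G"
  shows "sub_r0 G phi y \<in> flags G" "sub_r0 G phi (sub_r0 G phi y) = y" "sub_r0 G phi y \<noteq> y"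
  using rg_basic[OF assms] edge_of_r0[OF assms] edge_of_r2[OF assms]
  unfolding sub_r0_def by auto

lemma gen_rel2: "(u,v) \<in> gen_rel F [g,h] \<longleftrightarrow> u \<in> F \<and> (v = g u \<or> v = h u)"
  unfolding gen_rel_def by auto

lemma sym_gen_rel2:
  assumes "\<forall>y\<in>F. g y \<in> F \<and> g (g y) = y" "\<forall>y\<in>F. h y \<in> F \<and> h (h y) = y"
  shows "sym (gen_rel F [g,h])"
  unfolding sym_def gen_rel2 using assms by metis

lemma nbc_conn:
  assumes "flags G \<noteq> {}"
  shows "num_boundary_components G phi = 1 \<longleftrightarrow>
         conn (flags G) (gen_rel (flags G) [sub_r0 G phi, r1 G])"
  unfolding num_boundary_components_def num_orbits_def using card_quot_one[OF assms] by blast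

locale RS =
  fixes G :: "'f rmap" and x :: 'f
  assumes rg: "ribbon_graph G" and xF: "x \<in> flags G"
    and ab: "edge_of G x \<noteq> edge_of G (r1 G x)"
begin

abbreviation "F \<equiv> flags G"
abbreviation "a \<equiv> edge_of G x"
abbreviation "b \<equiv> edge_of G (r1 G x)"
definition "a2 = x"
definition "a1 = r2 G x"
definition "b1 = r1 G x"
definition "b2 = r2 G (r1 G x)"
definition "a1' = r0 G a1"
definition "a2' = r0 G a2"
definition "b1' = r0 G b1"
definition "b2' = r0 G b2"
definition "p = r1 G a1"
definition "n = r1 G b2"

lemmas defs = a1_def a2_def b1_def b2_def a1'_def a2'_def b1'_def b2'_def p_def n_def

lemma inF: "a1 \<in> F" "a2 \<in> F" "b1 \<in> F" "b2 \<in> F" "a1' \<in> F" "a2' \<in> F" "b1' \<in> F" "b2' \<in> F"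
  "p \<in> F" "n \<in> F"
  using rg_basic[OF rg xF] rg_basic[OF rg] xF unfolding defs by auto

lemma ea: "a = {a1, a2, a1', a2'}"
  using rg_basic[OF rg xF] unfolding defs edge_of_def by auto

lemma eb: "b = {b1, b2, b1', b2'}"
proof -
  have "r1 G x \<in> F" using rg_basic[OF rg xF] by simp
  then show ?thesis using rg_basic[OF rg] unfolding defs edge_of_def by auto
qed

lemma edge_in:
  assumes "z \<in> F" "y \<in> edge_of G z" shows "edge_of G y = edge_of G z"
  using assms edge_of_r0[OF rg] edge_of_r2[OF rg] rg_basic[OF rg] unfolding edge_of_def
  by auto

lemma ea_of: "edge_of G a1 = a" "edge_of G a2 = a" "edge_of G a1' = a" "edge_of G a2' = a"
  using edge_in[OF xF] ea by auto

lemma eb_of: "edge_of G b1 = b" "edge_of G b2 = b" "edge_of G b1' = b" "edge_of G b2' = b"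
proof -
  have "r1 G x \<in> F" using rg_basic[OF rg xF] by simp
  then show "edge_of G b1 = b" "edge_of G b2 = b" "edge_of G b1' = b" "edge_of G b2' = b"
    using edge_in eb unfolding b1_def by auto
qed

lemma dist_a: "a1 \<noteq> a2" "a1 \<noteq> a1'" "a1 \<noteq> a2'" "a2 \<noteq> a1'" "a2 \<noteq> a2'" "a1' \<noteq> a2'"
  using rg_basic[OF rg xF] rg_basic[OF rg] xF unfolding defs by metis+

lemma dist_b: "b1 \<noteq> b2" "b1 \<noteq> b1'" "b1 \<noteq> b2'" "b2 \<noteq> b1'" "b2 \<noteq> b2'" "b1' \<noteq> b2'"
proof -
  have "r1 G x \<in> F" using rg_basic[OF rg xF] by simp
  then show "b1 \<noteq> b2" "b1 \<noteq> b1'" "b1 \<noteq> b2'" "b2 \<noteq> b1'" "b2 \<noteq> b2'" "b1' \<noteq> b2'"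
    using rg_basic[OF rg] unfolding defs by metis+
qed

lemma dist_ab: "\<And>u v. u \<in> {a1,a2,a1',a2'} \<Longrightarrow> v \<in> {b1,b2,b1',b2'} \<Longrightarrow> u \<noteq> v"
  using ea_of eb_of ab by auto

end


context RS begin

lemma t_vals: "r1 G a1 = p" "r1 G p = a1" "r1 G a2 = b1" "r1 G b1 = a2" "r1 G b2 = n" "r1 G n = b2"
  using rg_basic[OF rg] inF unfolding defs by auto

lemma t_inv: "u \<in> F \<Longrightarrow> r1 G u = w \<Longrightarrow> u = r1 G w"
  using rg_basic[OF rg] by auto

lemma s_inv: "u \<in> F \<Longrightarrow> sub_r0 G phi u = w \<Longrightarrow> u = sub_r0 G phi w"
  using sub_r0_inv[OF rg] by auto

lemma pn_dist: "p \<noteq> a1" "p \<noteq> a2" "p \<noteq> b1" "n \<noteq> a2" "n \<noteq> b1" "n \<noteq> b2"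
  "n = a1 \<longleftrightarrow> p = b2"
proof -
  have i: "\<And>u w. u \<in> F \<Longrightarrow> r1 G u = w \<Longrightarrow> u = r1 G w" by (rule t_inv)
  have f: "\<And>u. u \<in> F \<Longrightarrow> r1 G u \<noteq> u" using rg_basic[OF rg] by blast
  show "p \<noteq> a1" using f[OF inF(1)] t_vals by simp
  show "p \<noteq> a2" using i[OF inF(1), of a2] t_vals dist_ab[of a1 b1] by auto
  show "p \<noteq> b1" using i[OF inF(1), of b1] t_vals dist_a by auto
  show "n \<noteq> b2" using f[OF inF(4)] t_vals by simp
  show "n \<noteq> b1" using i[OF inF(4), of b1] t_vals dist_ab[of a2 b2] by auto
  show "n \<noteq> a2" using i[OF inF(4), of a2] t_vals dist_b by auto
  show "n = a1 \<longleftrightarrow> p = b2" using i[OF inF(4), of a1] i[OF inF(1), of b2] t_vals by auto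
qed

lemma s_a_in: assumes "a \<in> phi"
  shows "sub_r0 G phi a1 = a1'" "sub_r0 G phi a1' = a1" "sub_r0 G phi a2 = a2'" "sub_r0 G phi a2' = a2"
  using assms ea_of rg_basic[OF rg] inF unfolding sub_r0_def defs by auto

lemma s_a_out: assumes "a \<notin> phi"
  shows "sub_r0 G phi a1 = a2" "sub_r0 G phi a1' = a2'" "sub_r0 G phi a2 = a1" "sub_r0 G phi a2' = a1'"
  using assms ea_of rg_basic[OF rg] inF r0r2r0[OF rg xF] unfolding sub_r0_def defs by auto

lemma s_b_in: assumes "b \<in> phi"
  shows "sub_r0 G phi b1 = b1'" "sub_r0 G phi b1' = b1" "sub_r0 G phi b2 = b2'" "sub_r0 G phi b2' = b2"
  using assms eb_of rg_basic[OF rg] inF unfolding sub_r0_def defs by auto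

lemma s_b_out: assumes "b \<notin> phi"
  shows "sub_r0 G phi b1 = b2" "sub_r0 G phi b1' = b2'" "sub_r0 G phi b2 = b1" "sub_r0 G phi b2' = b1'"
proof -
  have b1F: "r1 G x \<in> F" using rg_basic[OF rg xF] by simp
  show "sub_r0 G phi b1 = b2" "sub_r0 G phi b1' = b2'" "sub_r0 G phi b2 = b1" "sub_r0 G phi b2' = b1'"
    using assms eb_of rg_basic[OF rg] inF r0r2r0[OF rg b1F] unfolding sub_r0_def defs by auto
qed

lemma ex_vals: assumes "n \<noteq> a1"
  shows "exchange_r1 G x y = (if y = p then b1 else if y = b1 then p else if y = b2 then a1
     else if y = a1 then b2 else if y = a2 then n else if y = n then a2 else r1 G y)"
  using assms unfolding exchange_r1_def Let_def defs by simp

lemma ex_deg: assumes "n = a1" shows "exchange_r1 G x = r1 G"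
  using assms unfolding exchange_r1_def Let_def defs by simp



lemma dab: "a1 \<noteq> b1" "a1 \<noteq> b2" "a1 \<noteq> b1'" "a1 \<noteq> b2'"
  "a2 \<noteq> b1" "a2 \<noteq> b2" "a2 \<noteq> b1'" "a2 \<noteq> b2'"
  "a1' \<noteq> b1" "a1' \<noteq> b2" "a1' \<noteq> b1'" "a1' \<noteq> b2'"
  "a2' \<noteq> b1" "a2' \<noteq> b2" "a2' \<noteq> b1'" "a2' \<noteq> b2'"
  by (rule dist_ab; simp)+

lemmas dall0 = dist_a dist_b dab pn_dist(1-6)
lemmas dall = dall0 dall0[symmetric]



lemma main_d: assumes "n \<noteq> a1" shows "p \<noteq> b2" "p \<noteq> n" "n \<noteq> a1" "b2 \<noteq> p" "n \<noteq> p" "a1 \<noteq> n"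
proof -
  show "p \<noteq> b2" "b2 \<noteq> p" using assms pn_dist(7) by auto
  show "n \<noteq> a1" "a1 \<noteq> n" using assms by auto
  have pn: "p \<noteq> n"
  proof
    assume "p = n"
    then have "r1 G (r1 G a1) = r1 G (r1 G b2)" unfolding p_def n_def by simp
    then have "a1 = b2" using rg_basic(5)[OF rg inF(1)] rg_basic(5)[OF rg inF(4)] by simp
    then show False using dab(2) by simp
  qed
  then show "p \<noteq> n" "n \<noteq> p" by auto
qed

lemma tv: assumes na: "n \<noteq> a1"
  shows "exchange_r1 G x p = b1" "exchange_r1 G x b1 = p" "exchange_r1 G x b2 = a1"
    "exchange_r1 G x a1 = b2" "exchange_r1 G x a2 = n" "exchange_r1 G x n = a2"
  by (simp_all add: ex_vals[OF na] dall main_d[OF na])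

end


lemma proj_gen:
  assumes F0: "F0 \<subseteq> F" and fF: "\<forall>y\<in>F. f y \<in> F0" and fid: "\<forall>y\<in>F0. f y = y"
    and hg: "\<forall>u\<in>F. f u = f (g u) \<or> (f u, f (g u)) \<in> Q"
    and hh: "\<forall>u\<in>F. f u = f (h u) \<or> (f u, f (h u)) \<in> Q"
    and QR: "Q \<subseteq> (gen_rel F [g,h])\<^sup>*"
    and bk: "\<forall>y\<in>F. (y, f y) \<in> (gen_rel F [g,h])\<^sup>* \<and> (f y, y) \<in> (gen_rel F [g,h])\<^sup>*"
  shows "conn F (gen_rel F [g,h]) \<longleftrightarrow> conn F0 Q"
proof (rule proj_conn[OF F0 fF fid _ QR bk])
  show "\<forall>u v. (u, v) \<in> gen_rel F [g, h] \<longrightarrow> (f u, f v) \<in> Q\<^sup>*"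
  proof (intro allI impI)
    fix u v assume "(u,v) \<in> gen_rel F [g,h]"
    then have "u \<in> F" "v = g u \<or> v = h u" unfolding gen_rel2 by auto
    then have "f u = f v \<or> (f u, f v) \<in> Q" using hg hh by blast
    then show "(f u, f v) \<in> Q\<^sup>*" by auto
  qed
qed

lemma gen_rel_in: "u \<in> F \<Longrightarrow> (u, g u) \<in> gen_rel F [g,h]" "u \<in> F \<Longrightarrow> (u, h u) \<in> gen_rel F [g,h]"
  unfolding gen_rel2 by auto

lemma inv_back:
  assumes "\<forall>u\<in>F. g u \<in> F \<and> g (g u) = u" "u \<in> F" "g u \<in> X" "\<forall>y\<in>X. g y \<in> X"
  shows "u \<in> X"
  using assms by metis

lemma path2: "(x,y) \<in> R \<Longrightarrow> (y,z) \<in> R \<Longrightarrow> (x,z) \<in> R\<^sup>*"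
  by (meson r_into_rtrancl rtrancl_into_rtrancl)

lemma path3: "(x,y) \<in> R \<Longrightarrow> (y,z) \<in> R \<Longrightarrow> (z,w) \<in> R \<Longrightarrow> (x,w) \<in> R\<^sup>*"
  by (meson r_into_rtrancl rtrancl_into_rtrancl)

lemma pair_rt: "(x,y) \<in> R \<Longrightarrow> (y,x) \<in> R \<Longrightarrow> (x,y) \<in> R\<^sup>* \<and> (y,x) \<in> R\<^sup>*"
  by auto

context RS begin

lemma Sinv: "\<forall>u\<in>F. sub_r0 G phi u \<in> F \<and> sub_r0 G phi (sub_r0 G phi u) = u"
  using sub_r0_inv[OF rg] by blast

lemma rinv: "\<forall>u\<in>F. r1 G u \<in> F \<and> r1 G (r1 G u) = u"
  using rg_basic[OF rg] by blast

lemma r_X0: "\<forall>y\<in>{p,b1,b2,a1,a2,n}. r1 G y \<in> {p,b1,b2,a1,a2,n}"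
  using t_vals by auto

lemma tinv: assumes na: "n \<noteq> a1"
  shows "\<forall>u\<in>F. exchange_r1 G x u \<in> F \<and> exchange_r1 G x (exchange_r1 G x u) = u"
proof
  fix u assume u: "u \<in> F"
  show "exchange_r1 G x u \<in> F \<and> exchange_r1 G x (exchange_r1 G x u) = u"
  proof (cases "u \<in> {p,b1,b2,a1,a2,n}")
    case True then show ?thesis using tv[OF na] inF by auto
  next
    case False
    then have "r1 G u \<notin> {p,b1,b2,a1,a2,n}" using inv_back[OF rinv u _ r_X0] by blast
    then show ?thesis using False ex_vals[OF na] rinv u by simp
  qed
qed

lemma case_a_out:
  assumes aphi: "a \<notin> phi" and na: "n \<noteq> a1"
  shows "conn F (gen_rel F [sub_r0 G phi, exchange_r1 G x]) \<longleftrightarrow>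
         conn F (gen_rel F [sub_r0 G phi, r1 G])"
proof -
  let ?S = "sub_r0 G phi" and ?t = "exchange_r1 G x" and ?r = "r1 G"
  let ?R1 = "gen_rel F [?S, ?r]" and ?R2 = "gen_rel F [?S, ?t]"
  define F0 where "F0 = F - {a1,a2}"
  define K where "K = {(u,v) \<in> ?R1. u \<in> F0 \<and> v \<in> F0}"
  define Q where "Q = K \<union> {(p,b1),(b1,p)}"
  have S: "?S a1 = a2" "?S a2 = a1" using s_a_out[OF aphi] by auto
  have SX: "\<forall>y\<in>{a1,a2}. ?S y \<in> {a1,a2}" using S by auto
  have rX: "\<forall>y\<in>{a1,a2,p,b1}. ?r y \<in> {a1,a2,p,b1}" using t_vals by auto
  have tv: "?t p = b1" "?t b1 = p" "?t b2 = a1" "?t a1 = b2" "?t a2 = n" "?t n = a2"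
    using tv[OF na] by auto
  have to: "\<And>y. y \<notin> {p,b1,b2,a1,a2,n} \<Longrightarrow> ?t y = ?r y" using ex_vals[OF na] by auto
  have d: "p \<noteq> a1" "p \<noteq> a2" "b1 \<noteq> a1" "b1 \<noteq> a2" "b2 \<noteq> a1" "b2 \<noteq> a2" "n \<noteq> a1" "n \<noteq> a2"
    using dall main_d[OF na] by auto
  have F0s: "F0 \<subseteq> F" unfolding F0_def by auto
  have inF0: "p \<in> F0" "b1 \<in> F0" "b2 \<in> F0" "n \<in> F0" using d inF unfolding F0_def by auto
  have KR1: "K \<subseteq> ?R1" unfolding K_def by auto
  have Kin: "\<And>u v. u \<in> F \<Longrightarrow> (v = ?S u \<or> v = ?r u) \<Longrightarrow> u \<notin> {a1,a2} \<Longrightarrow> v \<notin> {a1,a2} \<Longrightarrow> (u,v) \<in> K"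
    unfolding K_def F0_def gen_rel2 using Sinv rinv by auto
  define f1 where "f1 = (\<lambda>y. if y = a1 then p else if y = a2 then b1 else y)"
  have c1: "conn F ?R1 \<longleftrightarrow> conn F0 Q"
  proof (rule proj_gen[OF F0s])
    show "\<forall>y\<in>F. f1 y \<in> F0" using inF0 unfolding f1_def F0_def by auto
    show "\<forall>y\<in>F0. f1 y = y" unfolding f1_def F0_def by auto
    show "\<forall>u\<in>F. f1 u = f1 (?S u) \<or> (f1 u, f1 (?S u)) \<in> Q"
    proof
      fix u assume u: "u \<in> F"
      show "f1 u = f1 (?S u) \<or> (f1 u, f1 (?S u)) \<in> Q"
      proof (cases "u \<in> {a1,a2}")
        case True then show ?thesis using S d unfolding f1_def Q_def by auto
      next
        case False
        then have n1: "?S u \<notin> {a1,a2}" using inv_back[OF Sinv u _ SX] by blast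
        then have "(u, ?S u) \<in> K" using Kin u False by blast
        then show ?thesis using False n1 unfolding f1_def Q_def by auto
      qed
    qed
    show "\<forall>u\<in>F. f1 u = f1 (?r u) \<or> (f1 u, f1 (?r u)) \<in> Q"
    proof
      fix u assume u: "u \<in> F"
      show "f1 u = f1 (?r u) \<or> (f1 u, f1 (?r u)) \<in> Q"
      proof (cases "u \<in> {a1,a2,p,b1}")
        case True
        then show ?thesis using t_vals d unfolding f1_def by auto
      next
        case False
        then have n1: "?r u \<notin> {a1,a2,p,b1}" using inv_back[OF rinv u _ rX] by blast
        then have "(u, ?r u) \<in> K" using Kin u False by blast
        then show ?thesis using False n1 unfolding f1_def Q_def by auto
      qed
    qed
    show "Q \<subseteq> ?R1\<^sup>*"
    proof -
      have e: "(p, a1) \<in> ?R1" "(a1, a2) \<in> ?R1" "(a2, b1) \<in> ?R1"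
        "(b1, a2) \<in> ?R1" "(a2, a1) \<in> ?R1" "(a1, p) \<in> ?R1"
        unfolding gen_rel2 using inF t_vals S by auto
      have "(p, b1) \<in> ?R1\<^sup>*" using path3[OF e(1-3)] .
      moreover have "(b1, p) \<in> ?R1\<^sup>*" using path3[OF e(4-6)] .
      ultimately show ?thesis using KR1 unfolding Q_def by auto
    qed
    show "\<forall>y\<in>F. (y, f1 y) \<in> ?R1\<^sup>* \<and> (f1 y, y) \<in> ?R1\<^sup>*"
    proof
      fix y assume y: "y \<in> F"
      have e: "(a1, p) \<in> ?R1" "(p, a1) \<in> ?R1" "(a2, b1) \<in> ?R1" "(b1, a2) \<in> ?R1"
        unfolding gen_rel2 using inF t_vals by auto
      show "(y, f1 y) \<in> ?R1\<^sup>* \<and> (f1 y, y) \<in> ?R1\<^sup>*"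
        using pair_rt[OF e(1,2)] pair_rt[OF e(3,4)] unfolding f1_def by simp
    qed
  qed
  have tinv': "\<forall>u\<in>F. ?t u \<in> F \<and> ?t (?t u) = u" by (rule tinv[OF na])
  have tX: "\<forall>y\<in>{a1,a2,b2,n}. ?t y \<in> {a1,a2,b2,n}" using tv by auto
  have tX6: "\<forall>y\<in>{p,b1,b2,a1,a2,n}. ?t y \<in> {p,b1,b2,a1,a2,n}" using tv by auto
  define f2 where "f2 = (\<lambda>y. if y = a1 then b2 else if y = a2 then n else y)"
  have c2: "conn F ?R2 \<longleftrightarrow> conn F0 Q"
  proof (rule proj_gen[OF F0s])
    show "\<forall>y\<in>F. f2 y \<in> F0" using inF0 unfolding f2_def F0_def by auto
    show "\<forall>y\<in>F0. f2 y = y" unfolding f2_def F0_def by auto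
    show "\<forall>u\<in>F. f2 u = f2 (?S u) \<or> (f2 u, f2 (?S u)) \<in> Q"
    proof
      fix u assume u: "u \<in> F"
      show "f2 u = f2 (?S u) \<or> (f2 u, f2 (?S u)) \<in> Q"
      proof (cases "u \<in> {a1,a2}")
        case True
        have "(b2, n) \<in> K" "(n, b2) \<in> K" using Kin[of b2 n] Kin[of n b2] inF t_vals d by auto
        then show ?thesis using True S d unfolding f2_def Q_def by auto
      next
        case False
        then have n1: "?S u \<notin> {a1,a2}" using inv_back[OF Sinv u _ SX] by blast
        then have "(u, ?S u) \<in> K" using Kin u False by blast
        then show ?thesis using False n1 unfolding f2_def Q_def by auto
      qed
    qed
    show "\<forall>u\<in>F. f2 u = f2 (?t u) \<or> (f2 u, f2 (?t u)) \<in> Q"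
    proof
      fix u assume u: "u \<in> F"
      show "f2 u = f2 (?t u) \<or> (f2 u, f2 (?t u)) \<in> Q"
      proof (cases "u \<in> {a1,a2,b2,n}")
        case True
        then show ?thesis using tv d unfolding f2_def by auto
      next
        case False
        then have n1: "?t u \<notin> {a1,a2,b2,n}" using inv_back[OF tinv' u _ tX] by blast
        show ?thesis
        proof (cases "u \<in> {p, b1}")
          case True then show ?thesis using tv d unfolding f2_def Q_def by auto
        next
          case False
          then have "u \<notin> {p,b1,b2,a1,a2,n}" using \<open>u \<notin> {a1,a2,b2,n}\<close> by auto
          then have tr: "?t u = ?r u" using to by blast
          then have "(u, ?t u) \<in> K" using Kin u n1 \<open>u \<notin> {a1,a2,b2,n}\<close> by auto
          then show ?thesis using \<open>u \<notin> {a1,a2,b2,n}\<close> n1 unfolding f2_def Q_def by auto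
        qed
      qed
    qed
    show "Q \<subseteq> ?R2\<^sup>*"
    proof
      fix e assume e: "e \<in> Q"
      have e1: "(p,b1) \<in> ?R2" "(b1,p) \<in> ?R2" unfolding gen_rel2 using inF tv by auto
      have e2: "(b2,a1) \<in> ?R2" "(a1,a2) \<in> ?R2" "(a2,n) \<in> ?R2" "(n,a2) \<in> ?R2" "(a2,a1) \<in> ?R2" "(a1,b2) \<in> ?R2"
        unfolding gen_rel2 using inF tv S by auto
      show "e \<in> ?R2\<^sup>*"
      proof (cases "e \<in> {(p,b1),(b1,p),(b2,n),(n,b2)}")
        case True
        then show ?thesis using e1 path3[OF e2(1-3)] path3[OF e2(4-6)] by auto
      next
        case False
        then obtain u v where e': "e = (u,v)" "(u,v) \<in> K" using e unfolding Q_def by (cases e) auto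
        then have uv: "u \<in> F0" "v \<in> F0" "v = ?S u \<or> v = ?r u" "u \<in> F" unfolding K_def gen_rel2 by auto
        show ?thesis
        proof (cases "v = ?S u")
          case True then have "(u,v) \<in> ?R2" using uv unfolding gen_rel2 by auto
          then show ?thesis using e' by auto
        next
          case False
          then have vr: "v = ?r u" using uv by blast
          have "u \<notin> {p,b1,b2,a1,a2,n}"
          proof
            assume "u \<in> {p,b1,b2,a1,a2,n}"
            then show False using vr uv t_vals \<open>e \<notin> {(p,b1),(b1,p),(b2,n),(n,b2)}\<close> e'
              unfolding F0_def by auto
          qed
          then have "v = ?t u" using vr to by auto
          then have "(u,v) \<in> ?R2" using uv unfolding gen_rel2 by auto
          then show ?thesis using e' by auto
        qed
      qed
    qed
    show "\<forall>y\<in>F. (y, f2 y) \<in> ?R2\<^sup>* \<and> (f2 y, y) \<in> ?R2\<^sup>*"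
    proof
      fix y assume y: "y \<in> F"
      have e: "(a1, b2) \<in> ?R2" "(b2, a1) \<in> ?R2" "(a2, n) \<in> ?R2" "(n, a2) \<in> ?R2"
        unfolding gen_rel2 using inF tv by auto
      show "(y, f2 y) \<in> ?R2\<^sup>* \<and> (f2 y, y) \<in> ?R2\<^sup>*"
        using pair_rt[OF e(1,2)] pair_rt[OF e(3,4)] unfolding f2_def by simp
    qed
  qed
  show ?thesis using c1 c2 by simp
qed


lemma case_b_out:
  assumes bphi: "b \<notin> phi" and na: "n \<noteq> a1"
  shows "conn F (gen_rel F [sub_r0 G phi, exchange_r1 G x]) \<longleftrightarrow>
         conn F (gen_rel F [sub_r0 G phi, r1 G])"
proof -
  let ?S = "sub_r0 G phi" and ?t = "exchange_r1 G x" and ?r = "r1 G"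
  let ?R1 = "gen_rel F [?S, ?r]" and ?R2 = "gen_rel F [?S, ?t]"
  define F0 where "F0 = F - {b1,b2}"
  define K where "K = {(u,v) \<in> ?R1. u \<in> F0 \<and> v \<in> F0}"
  define Q where "Q = K \<union> {(a2,n),(n,a2)}"
  have S: "?S b1 = b2" "?S b2 = b1" using s_b_out[OF bphi] by auto
  have SX: "\<forall>y\<in>{b1,b2}. ?S y \<in> {b1,b2}" using S by auto
  have rX: "\<forall>y\<in>{b1,b2,a2,n}. ?r y \<in> {b1,b2,a2,n}" using t_vals by auto
  have tv: "?t p = b1" "?t b1 = p" "?t b2 = a1" "?t a1 = b2" "?t a2 = n" "?t n = a2"
    using tv[OF na] by auto
  have to: "\<And>y. y \<notin> {p,b1,b2,a1,a2,n} \<Longrightarrow> ?t y = ?r y" using ex_vals[OF na] by auto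
  have d: "p \<noteq> b1" "p \<noteq> b2" "a1 \<noteq> b1" "a1 \<noteq> b2" "a2 \<noteq> b1" "a2 \<noteq> b2" "n \<noteq> b1" "n \<noteq> b2"
    using dall main_d[OF na] by auto
  have F0s: "F0 \<subseteq> F" unfolding F0_def by auto
  have inF0: "p \<in> F0" "a1 \<in> F0" "a2 \<in> F0" "n \<in> F0" using d inF unfolding F0_def by auto
  have KR1: "K \<subseteq> ?R1" unfolding K_def by auto
  have Kin: "\<And>u v. u \<in> F \<Longrightarrow> (v = ?S u \<or> v = ?r u) \<Longrightarrow> u \<notin> {b1,b2} \<Longrightarrow> v \<notin> {b1,b2} \<Longrightarrow> (u,v) \<in> K"
    unfolding K_def F0_def gen_rel2 using Sinv rinv by auto
  define f1 where "f1 = (\<lambda>y. if y = b1 then a2 else if y = b2 then n else y)"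
  have c1: "conn F ?R1 \<longleftrightarrow> conn F0 Q"
  proof (rule proj_gen[OF F0s])
    show "\<forall>y\<in>F. f1 y \<in> F0" using inF0 unfolding f1_def F0_def by auto
    show "\<forall>y\<in>F0. f1 y = y" unfolding f1_def F0_def by auto
    show "\<forall>u\<in>F. f1 u = f1 (?S u) \<or> (f1 u, f1 (?S u)) \<in> Q"
    proof
      fix u assume u: "u \<in> F"
      show "f1 u = f1 (?S u) \<or> (f1 u, f1 (?S u)) \<in> Q"
      proof (cases "u \<in> {b1,b2}")
        case True then show ?thesis using S d unfolding f1_def Q_def by auto
      next
        case False
        then have n1: "?S u \<notin> {b1,b2}" using inv_back[OF Sinv u _ SX] by blast
        then have "(u, ?S u) \<in> K" using Kin u False by blast
        then show ?thesis using False n1 unfolding f1_def Q_def by auto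
      qed
    qed
    show "\<forall>u\<in>F. f1 u = f1 (?r u) \<or> (f1 u, f1 (?r u)) \<in> Q"
    proof
      fix u assume u: "u \<in> F"
      show "f1 u = f1 (?r u) \<or> (f1 u, f1 (?r u)) \<in> Q"
      proof (cases "u \<in> {b1,b2,a2,n}")
        case True
        then show ?thesis using t_vals d unfolding f1_def by auto
      next
        case False
        then have n1: "?r u \<notin> {b1,b2,a2,n}" using inv_back[OF rinv u _ rX] by blast
        then have "(u, ?r u) \<in> K" using Kin u False by blast
        then show ?thesis using False n1 unfolding f1_def Q_def by auto
      qed
    qed
    show "Q \<subseteq> ?R1\<^sup>*"
    proof -
      have e: "(a2, b1) \<in> ?R1" "(b1, b2) \<in> ?R1" "(b2, n) \<in> ?R1"
        "(n, b2) \<in> ?R1" "(b2, b1) \<in> ?R1" "(b1, a2) \<in> ?R1"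
        unfolding gen_rel2 using inF t_vals S by auto
      have "(a2, n) \<in> ?R1\<^sup>*" using path3[OF e(1-3)] .
      moreover have "(n, a2) \<in> ?R1\<^sup>*" using path3[OF e(4-6)] .
      ultimately show ?thesis using KR1 unfolding Q_def by auto
    qed
    show "\<forall>y\<in>F. (y, f1 y) \<in> ?R1\<^sup>* \<and> (f1 y, y) \<in> ?R1\<^sup>*"
    proof
      fix y assume y: "y \<in> F"
      have e: "(b1, a2) \<in> ?R1" "(a2, b1) \<in> ?R1" "(b2, n) \<in> ?R1" "(n, b2) \<in> ?R1"
        unfolding gen_rel2 using inF t_vals by auto
      show "(y, f1 y) \<in> ?R1\<^sup>* \<and> (f1 y, y) \<in> ?R1\<^sup>*"
        using pair_rt[OF e(1,2)] pair_rt[OF e(3,4)] unfolding f1_def by simp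
    qed
  qed
  have tinv': "\<forall>u\<in>F. ?t u \<in> F \<and> ?t (?t u) = u" by (rule tinv[OF na])
  have tX: "\<forall>y\<in>{b1,b2,p,a1}. ?t y \<in> {b1,b2,p,a1}" using tv by auto
  define f2 where "f2 = (\<lambda>y. if y = b1 then p else if y = b2 then a1 else y)"
  have pa1: "(p, a1) \<in> K" "(a1, p) \<in> K" using Kin[of p a1] Kin[of a1 p] inF t_vals d by auto
  have c2: "conn F ?R2 \<longleftrightarrow> conn F0 Q"
  proof (rule proj_gen[OF F0s])
    show "\<forall>y\<in>F. f2 y \<in> F0" using inF0 unfolding f2_def F0_def by auto
    show "\<forall>y\<in>F0. f2 y = y" unfolding f2_def F0_def by auto
    show "\<forall>u\<in>F. f2 u = f2 (?S u) \<or> (f2 u, f2 (?S u)) \<in> Q"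
    proof
      fix u assume u: "u \<in> F"
      show "f2 u = f2 (?S u) \<or> (f2 u, f2 (?S u)) \<in> Q"
      proof (cases "u \<in> {b1,b2}")
        case True
        then show ?thesis using pa1 S d unfolding f2_def Q_def by auto
      next
        case False
        then have n1: "?S u \<notin> {b1,b2}" using inv_back[OF Sinv u _ SX] by blast
        then have "(u, ?S u) \<in> K" using Kin u False by blast
        then show ?thesis using False n1 unfolding f2_def Q_def by auto
      qed
    qed
    show "\<forall>u\<in>F. f2 u = f2 (?t u) \<or> (f2 u, f2 (?t u)) \<in> Q"
    proof
      fix u assume u: "u \<in> F"
      show "f2 u = f2 (?t u) \<or> (f2 u, f2 (?t u)) \<in> Q"
      proof (cases "u \<in> {b1,b2,p,a1}")
        case True
        then show ?thesis using tv d unfolding f2_def by auto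
      next
        case False
        then have n1: "?t u \<notin> {b1,b2,p,a1}" using inv_back[OF tinv' u _ tX] by blast
        show ?thesis
        proof (cases "u \<in> {a2, n}")
          case True then show ?thesis using tv d unfolding f2_def Q_def by auto
        next
          case False
          then have "u \<notin> {p,b1,b2,a1,a2,n}" using \<open>u \<notin> {b1,b2,p,a1}\<close> by auto
          then have tr: "?t u = ?r u" using to by blast
          then have "(u, ?t u) \<in> K" using Kin u n1 \<open>u \<notin> {b1,b2,p,a1}\<close> by auto
          then show ?thesis using \<open>u \<notin> {b1,b2,p,a1}\<close> n1 unfolding f2_def Q_def by auto
        qed
      qed
    qed
    show "Q \<subseteq> ?R2\<^sup>*"
    proof
      fix e assume e: "e \<in> Q"
      have e1: "(a2,n) \<in> ?R2" "(n,a2) \<in> ?R2" unfolding gen_rel2 using inF tv by auto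
      have e2: "(p,b1) \<in> ?R2" "(b1,b2) \<in> ?R2" "(b2,a1) \<in> ?R2" "(a1,b2) \<in> ?R2" "(b2,b1) \<in> ?R2" "(b1,p) \<in> ?R2"
        unfolding gen_rel2 using inF tv S by auto
      show "e \<in> ?R2\<^sup>*"
      proof (cases "e \<in> {(a2,n),(n,a2),(p,a1),(a1,p)}")
        case True
        then show ?thesis using e1 path3[OF e2(1-3)] path3[OF e2(4-6)] by auto
      next
        case False
        then obtain u v where e': "e = (u,v)" "(u,v) \<in> K" using e unfolding Q_def by (cases e) auto
        then have uv: "u \<in> F0" "v \<in> F0" "v = ?S u \<or> v = ?r u" "u \<in> F" unfolding K_def gen_rel2 by auto
        show ?thesis
        proof (cases "v = ?S u")
          case True then have "(u,v) \<in> ?R2" using uv unfolding gen_rel2 by auto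
          then show ?thesis using e' by auto
        next
          case False
          then have vr: "v = ?r u" using uv by blast
          have "u \<notin> {p,b1,b2,a1,a2,n}"
          proof
            assume "u \<in> {p,b1,b2,a1,a2,n}"
            then show False using vr uv t_vals \<open>e \<notin> {(a2,n),(n,a2),(p,a1),(a1,p)}\<close> e'
              unfolding F0_def by auto
          qed
          then have "v = ?t u" using vr to by auto
          then have "(u,v) \<in> ?R2" using uv unfolding gen_rel2 by auto
          then show ?thesis using e' by auto
        qed
      qed
    qed
    show "\<forall>y\<in>F. (y, f2 y) \<in> ?R2\<^sup>* \<and> (f2 y, y) \<in> ?R2\<^sup>*"
    proof
      fix y assume y: "y \<in> F"
      have e: "(b1, p) \<in> ?R2" "(p, b1) \<in> ?R2" "(b2, a1) \<in> ?R2" "(a1, b2) \<in> ?R2"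
        unfolding gen_rel2 using inF tv by auto
      show "(y, f2 y) \<in> ?R2\<^sup>* \<and> (f2 y, y) \<in> ?R2\<^sup>*"
        using pair_rt[OF e(1,2)] pair_rt[OF e(3,4)] unfolding f2_def by simp
    qed
  qed
  show ?thesis using c1 c2 by simp
qed

end




lemma path5: "(x1,x2) \<in> R \<Longrightarrow> (x2,x3) \<in> R \<Longrightarrow> (x3,x4) \<in> R \<Longrightarrow> (x4,x5) \<in> R \<Longrightarrow> (x5,x6) \<in> R \<Longrightarrow> (x1,x6) \<in> R\<^sup>*"
  by (meson r_into_rtrancl rtrancl_into_rtrancl)

context RS begin

definition "I0 = {a1,a2,b1,b2}"
definition "F0 = F - I0"
definition "Kp phi = {(u,v) \<in> gen_rel F [sub_r0 G phi, r1 G]. u \<in> F0 \<and> v \<in> F0}"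
definition "vert l = (case l of LP \<Rightarrow> p | LN \<Rightarrow> n | LA1 \<Rightarrow> a1' | LA2 \<Rightarrow> a2' | LB1 \<Rightarrow> b1' | LB2 \<Rightarrow> b2')"
definition "Mrel m = (\<lambda>l. (vert l, vert (m l))) ` UNIV"

lemma Mrel_vals: "Mrel m1 = {(p,a1'),(a1',p),(a2',b1'),(b1',a2'),(b2',n),(n,b2')}"
  "Mrel m2 = {(p,b1'),(b1',p),(b2',a1'),(a1',b2'),(a2',n),(n,a2')}"
  "Mrel m3 = {(p,n),(n,p),(a1',a2'),(a2',a1'),(b1',b2'),(b2',b1')}"
  unfolding Mrel_def UNIV_lab vert_def by auto

lemma notI0: assumes "n \<noteq> a1"
  shows "p \<notin> I0" "n \<notin> I0" "a1' \<notin> I0" "a2' \<notin> I0" "b1' \<notin> I0" "b2' \<notin> I0"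
  unfolding I0_def using dall main_d[OF assms] by auto

lemma inF0: assumes "n \<noteq> a1"
  shows "p \<in> F0" "n \<in> F0" "a1' \<in> F0" "a2' \<in> F0" "b1' \<in> F0" "b2' \<in> F0"
  unfolding F0_def using notI0[OF assms] inF by auto

lemma F0_sub: "F0 \<subseteq> F" unfolding F0_def by auto

lemma Kin: "u \<in> F \<Longrightarrow> (v = sub_r0 G phi u \<or> v = r1 G u) \<Longrightarrow> u \<notin> I0 \<Longrightarrow> v \<notin> I0 \<Longrightarrow> (u,v) \<in> Kp phi"
  unfolding Kp_def F0_def gen_rel2 using Sinv rinv by auto


lemma conf1:
  assumes aphi: "a \<in> phi" and bphi: "b \<in> phi" and na: "n \<noteq> a1"
  shows "conn F (gen_rel F [sub_r0 G phi, r1 G]) \<longleftrightarrow> conn F0 (Kp phi \<union> Mrel m1)"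
proof -
  let ?S = "sub_r0 G phi" and ?r = "r1 G"
  let ?R = "gen_rel F [?S, ?r]" and ?Q = "Kp phi \<union> Mrel m1"
  have S: "?S a1 = a1'" "?S a1' = a1" "?S a2 = a2'" "?S a2' = a2"
    "?S b1 = b1'" "?S b1' = b1" "?S b2 = b2'" "?S b2' = b2"
    using s_a_in[OF aphi] s_b_in[OF bphi] by auto
  have SX: "\<forall>y\<in>{a1,a2,b1,b2,a1',a2',b1',b2'}. ?S y \<in> {a1,a2,b1,b2,a1',a2',b1',b2'}" using S by auto
  have rX: "\<forall>y\<in>{a1,a2,b1,b2,p,n}. ?r y \<in> {a1,a2,b1,b2,p,n}" using t_vals by auto
  have d: "p \<notin> I0" "n \<notin> I0" "a1' \<notin> I0" "a2' \<notin> I0" "b1' \<notin> I0" "b2' \<notin> I0" by (rule notI0[OF na])+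
  have dd: "a1 \<noteq> a2" "a1 \<noteq> b1" "a1 \<noteq> b2" "a2 \<noteq> b1" "a2 \<noteq> b2" "b1 \<noteq> b2"
    "a2 \<noteq> a1" "b1 \<noteq> a1" "b2 \<noteq> a1" "b1 \<noteq> a2" "b2 \<noteq> a2" "b2 \<noteq> b1"
    using dall by auto
  define f where "f = (\<lambda>y. if y = a1 then p else if y = a2 then a2' else if y = b1 then b1' else if y = b2 then n else y)"
  have fI: "f a1 = p" "f a2 = a2'" "f b1 = b1'" "f b2 = n" unfolding f_def using dd by auto
  have fO: "\<And>y. y \<notin> I0 \<Longrightarrow> f y = y" unfolding f_def I0_def by auto
  have fv: "f p = p" "f n = n" "f a1' = a1'" "f a2' = a2'" "f b1' = b1'" "f b2' = b2'"
    using fO d by auto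
  show ?thesis
  proof (rule proj_gen[OF F0_sub])
    show "\<forall>y\<in>F. f y \<in> F0"
    proof
      fix y assume y: "y \<in> F"
      show "f y \<in> F0"
      proof (cases "y \<in> I0")
        case True then have "y = a1 \<or> y = a2 \<or> y = b1 \<or> y = b2" unfolding I0_def by auto
        then show ?thesis using fI inF0[OF na] by auto
      next
        case False then show ?thesis using fO y unfolding F0_def by auto
      qed
    qed
    show "\<forall>y\<in>F0. f y = y" using fO unfolding F0_def by auto
    show "\<forall>u\<in>F. f u = f (?S u) \<or> (f u, f (?S u)) \<in> ?Q"
    proof
      fix u assume u: "u \<in> F"
      show "f u = f (?S u) \<or> (f u, f (?S u)) \<in> ?Q"
      proof (cases "u \<in> {a1,a2,b1,b2,a1',a2',b1',b2'}")
        case True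
        then show ?thesis by (elim insertE) (simp_all add: S fI fv Mrel_vals)
      next
        case False
        then have n1: "?S u \<notin> {a1,a2,b1,b2,a1',a2',b1',b2'}" using inv_back[OF Sinv u _ SX] by blast
        then have "(u, ?S u) \<in> Kp phi" using Kin u False unfolding I0_def by blast
        then show ?thesis using False n1 fO unfolding I0_def by auto
      qed
    qed
    show "\<forall>u\<in>F. f u = f (?r u) \<or> (f u, f (?r u)) \<in> ?Q"
    proof
      fix u assume u: "u \<in> F"
      show "f u = f (?r u) \<or> (f u, f (?r u)) \<in> ?Q"
      proof (cases "u \<in> {a1,a2,b1,b2,p,n}")
        case True
        then show ?thesis by (elim insertE) (simp_all add: t_vals fI fv Mrel_vals)
      next
        case False
        then have n1: "?r u \<notin> {a1,a2,b1,b2,p,n}" using inv_back[OF rinv u _ rX] by blast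
        then have "(u, ?r u) \<in> Kp phi" using Kin u False unfolding I0_def by blast
        then show ?thesis using False n1 fO unfolding I0_def by auto
      qed
    qed
    show "?Q \<subseteq> ?R\<^sup>*"
    proof -
      have e: "(p,a1) \<in> ?R" "(a1,a1') \<in> ?R" "(a1',a1) \<in> ?R" "(a1,p) \<in> ?R"
        "(a2',a2) \<in> ?R" "(a2,b1) \<in> ?R" "(b1,b1') \<in> ?R" "(b1',b1) \<in> ?R" "(b1,a2) \<in> ?R" "(a2,a2') \<in> ?R"
        "(b2',b2) \<in> ?R" "(b2,n) \<in> ?R" "(n,b2) \<in> ?R" "(b2,b2') \<in> ?R"
        unfolding gen_rel2 using inF t_vals S by auto
      have M: "Mrel m1 \<subseteq> ?R\<^sup>*" unfolding Mrel_vals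
        using path2[OF e(1,2)] path2[OF e(3,4)] path3[OF e(5-7)] path3[OF e(8-10)]
          path2[OF e(11,12)] path2[OF e(13,14)] by auto
      have "Kp phi \<subseteq> ?R" unfolding Kp_def by auto
      then show ?thesis using M by auto
    qed
    show "\<forall>y\<in>F. (y, f y) \<in> ?R\<^sup>* \<and> (f y, y) \<in> ?R\<^sup>*"
    proof
      fix y assume y: "y \<in> F"
      have e: "(a1, p) \<in> ?R" "(p, a1) \<in> ?R" "(a2, a2') \<in> ?R" "(a2', a2) \<in> ?R"
        "(b1, b1') \<in> ?R" "(b1', b1) \<in> ?R" "(b2, n) \<in> ?R" "(n, b2) \<in> ?R"
        unfolding gen_rel2 using inF t_vals S by auto
      show "(y, f y) \<in> ?R\<^sup>* \<and> (f y, y) \<in> ?R\<^sup>*"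
      proof (cases "y \<in> I0")
        case True
        then show ?thesis using fI pair_rt[OF e(1,2)] pair_rt[OF e(3,4)] pair_rt[OF e(5,6)] pair_rt[OF e(7,8)]
          unfolding I0_def by auto
      next
        case False then show ?thesis using fO by simp
      qed
    qed
  qed
qed



lemma conf2:
  assumes aphi: "a \<in> phi" and bphi: "b \<in> phi" and na: "n \<noteq> a1"
  shows "conn F (gen_rel F [sub_r0 G phi, exchange_r1 G x]) \<longleftrightarrow> conn F0 (Kp phi \<union> Mrel m2)"
proof -
  let ?S = "sub_r0 G phi" and ?r = "r1 G" and ?t = "exchange_r1 G x"
  let ?R = "gen_rel F [?S, ?t]" and ?Q = "Kp phi \<union> Mrel m2"
  have S: "?S a1 = a1'" "?S a1' = a1" "?S a2 = a2'" "?S a2' = a2"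
    "?S b1 = b1'" "?S b1' = b1" "?S b2 = b2'" "?S b2' = b2"
    using s_a_in[OF aphi] s_b_in[OF bphi] by auto
  have tv: "?t p = b1" "?t b1 = p" "?t b2 = a1" "?t a1 = b2" "?t a2 = n" "?t n = a2"
    using tv[OF na] by auto
  have to: "\<And>y. y \<notin> {p,b1,b2,a1,a2,n} \<Longrightarrow> ?t y = ?r y" using ex_vals[OF na] by auto
  have tinv': "\<forall>u\<in>F. ?t u \<in> F \<and> ?t (?t u) = u" by (rule tinv[OF na])
  have SX: "\<forall>y\<in>{a1,a2,b1,b2,a1',a2',b1',b2'}. ?S y \<in> {a1,a2,b1,b2,a1',a2',b1',b2'}" using S by auto
  have tX: "\<forall>y\<in>{a1,a2,b1,b2,p,n}. ?t y \<in> {a1,a2,b1,b2,p,n}" using tv by auto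
  have d: "p \<notin> I0" "n \<notin> I0" "a1' \<notin> I0" "a2' \<notin> I0" "b1' \<notin> I0" "b2' \<notin> I0" by (rule notI0[OF na])+
  have dd: "a1 \<noteq> a2" "a1 \<noteq> b1" "a1 \<noteq> b2" "a2 \<noteq> b1" "a2 \<noteq> b2" "b1 \<noteq> b2"
    "a2 \<noteq> a1" "b1 \<noteq> a1" "b2 \<noteq> a1" "b1 \<noteq> a2" "b2 \<noteq> a2" "b2 \<noteq> b1"
    using dall by auto
  define f where "f = (\<lambda>y. if y = b1 then p else if y = b2 then b2' else if y = a1 then a1' else if y = a2 then n else y)"
  have fI: "f a1 = a1'" "f a2 = n" "f b1 = p" "f b2 = b2'" unfolding f_def using dd by auto
  have fO: "\<And>y. y \<notin> I0 \<Longrightarrow> f y = y" unfolding f_def I0_def by auto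
  have fv: "f p = p" "f n = n" "f a1' = a1'" "f a2' = a2'" "f b1' = b1'" "f b2' = b2'"
    using fO d by auto
  show ?thesis
  proof (rule proj_gen[OF F0_sub])
    show "\<forall>y\<in>F. f y \<in> F0"
    proof
      fix y assume y: "y \<in> F"
      show "f y \<in> F0"
      proof (cases "y \<in> I0")
        case True then have "y = a1 \<or> y = a2 \<or> y = b1 \<or> y = b2" unfolding I0_def by auto
        then show ?thesis using fI inF0[OF na] by auto
      next
        case False then show ?thesis using fO y unfolding F0_def by auto
      qed
    qed
    show "\<forall>y\<in>F0. f y = y" using fO unfolding F0_def by auto
    show "\<forall>u\<in>F. f u = f (?S u) \<or> (f u, f (?S u)) \<in> ?Q"
    proof
      fix u assume u: "u \<in> F"
      show "f u = f (?S u) \<or> (f u, f (?S u)) \<in> ?Q"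
      proof (cases "u \<in> {a1,a2,b1,b2,a1',a2',b1',b2'}")
        case True
        then show ?thesis by (elim insertE) (simp_all add: S fI fv Mrel_vals)
      next
        case False
        then have n1: "?S u \<notin> {a1,a2,b1,b2,a1',a2',b1',b2'}" using inv_back[OF Sinv u _ SX] by blast
        then have "(u, ?S u) \<in> Kp phi" using Kin u False unfolding I0_def by blast
        then show ?thesis using False n1 fO unfolding I0_def by auto
      qed
    qed
    show "\<forall>u\<in>F. f u = f (?t u) \<or> (f u, f (?t u)) \<in> ?Q"
    proof
      fix u assume u: "u \<in> F"
      show "f u = f (?t u) \<or> (f u, f (?t u)) \<in> ?Q"
      proof (cases "u \<in> {a1,a2,b1,b2,p,n}")
        case True
        then show ?thesis by (elim insertE) (simp_all add: tv fI fv Mrel_vals)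
      next
        case False
        then have n1: "?t u \<notin> {a1,a2,b1,b2,p,n}" using inv_back[OF tinv' u _ tX] by blast
        have "?t u = ?r u" using to False by auto
        then have "(u, ?t u) \<in> Kp phi" using Kin[of u "?t u"] u False n1 unfolding I0_def by auto
        then show ?thesis using False n1 fO unfolding I0_def by auto
      qed
    qed
    show "?Q \<subseteq> ?R\<^sup>*"
    proof -
      have e: "(p,b1) \<in> ?R" "(b1,b1') \<in> ?R" "(b1',b1) \<in> ?R" "(b1,p) \<in> ?R"
        "(b2',b2) \<in> ?R" "(b2,a1) \<in> ?R" "(a1,a1') \<in> ?R" "(a1',a1) \<in> ?R" "(a1,b2) \<in> ?R" "(b2,b2') \<in> ?R"
        "(a2',a2) \<in> ?R" "(a2,n) \<in> ?R" "(n,a2) \<in> ?R" "(a2,a2') \<in> ?R"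
        unfolding gen_rel2 using inF tv S by auto
      have M: "Mrel m2 \<subseteq> ?R\<^sup>*" unfolding Mrel_vals
        using path2[OF e(1,2)] path2[OF e(3,4)] path3[OF e(5-7)] path3[OF e(8-10)]
          path2[OF e(11,12)] path2[OF e(13,14)] by auto
      have K: "Kp phi \<subseteq> ?R"
      proof
        fix e assume e: "e \<in> Kp phi"
        then obtain u v where uv: "e = (u,v)" "u \<in> F0" "v \<in> F0" "u \<in> F" "v = ?S u \<or> v = ?r u"
          unfolding Kp_def gen_rel2 by auto
        show "e \<in> ?R"
        proof (cases "v = ?S u")
          case True then show ?thesis using uv by (auto simp: gen_rel2)
        next
          case False
          then have vr: "v = ?r u" using uv by auto
          have "u \<notin> {a1,a2,b1,b2,p,n}"
          proof
            assume "u \<in> {a1,a2,b1,b2,p,n}"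
            then have "u \<in> I0 \<or> v \<in> I0" using vr t_vals unfolding I0_def by auto
            then show False using uv unfolding F0_def by auto
          qed
          then have "v = ?t u" using vr to by auto
          then show ?thesis using uv by (auto simp: gen_rel2)
        qed
      qed
      show ?thesis using M K by auto
    qed
    show "\<forall>y\<in>F. (y, f y) \<in> ?R\<^sup>* \<and> (f y, y) \<in> ?R\<^sup>*"
    proof
      fix y assume y: "y \<in> F"
      have e: "(b1, p) \<in> ?R" "(p, b1) \<in> ?R" "(b2, b2') \<in> ?R" "(b2', b2) \<in> ?R"
        "(a1, a1') \<in> ?R" "(a1', a1) \<in> ?R" "(a2, n) \<in> ?R" "(n, a2) \<in> ?R"
        unfolding gen_rel2 using inF tv S by auto
      show "(y, f y) \<in> ?R\<^sup>* \<and> (f y, y) \<in> ?R\<^sup>*"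
      proof (cases "y \<in> I0")
        case True
        then show ?thesis using fI pair_rt[OF e(1,2)] pair_rt[OF e(3,4)] pair_rt[OF e(5,6)] pair_rt[OF e(7,8)]
          unfolding I0_def by auto
      next
        case False then show ?thesis using fO by simp
      qed
    qed
  qed
qed



lemma S3_eq:
  assumes "y \<in> F" "y \<notin> {a1,a2,b1,b2,a1',a2',b1',b2'}"
  shows "sub_r0 G (phi - {a,b}) y = sub_r0 G phi y"
proof -
  have yy: "y \<in> edge_of G y" unfolding edge_of_def by simp
  have "edge_of G y \<noteq> a" "edge_of G y \<noteq> b" using assms(2) yy ea eb by auto
  then show ?thesis unfolding sub_r0_def by auto
qed

lemma conf3:
  assumes aphi: "a \<in> phi" and bphi: "b \<in> phi" and na: "n \<noteq> a1"
  shows "conn F (gen_rel F [sub_r0 G (phi - {a,b}), r1 G]) \<longleftrightarrow> conn F0 (Kp phi \<union> Mrel m3)"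
proof -
  let ?S = "sub_r0 G phi" and ?r = "r1 G" and ?S3 = "sub_r0 G (phi - {a,b})"
  let ?R = "gen_rel F [?S3, ?r]" and ?Q = "Kp phi \<union> Mrel m3"
  have S: "?S a1 = a1'" "?S a1' = a1" "?S a2 = a2'" "?S a2' = a2"
    "?S b1 = b1'" "?S b1' = b1" "?S b2 = b2'" "?S b2' = b2"
    using s_a_in[OF aphi] s_b_in[OF bphi] by auto
  have an: "a \<notin> phi - {a,b}" "b \<notin> phi - {a,b}" by auto
  have S3: "?S3 a1 = a2" "?S3 a1' = a2'" "?S3 a2 = a1" "?S3 a2' = a1'"
    "?S3 b1 = b2" "?S3 b1' = b2'" "?S3 b2 = b1" "?S3 b2' = b1'"
    using s_a_out[OF an(1)] s_b_out[OF an(2)] by auto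
  have SX: "\<forall>y\<in>{a1,a2,b1,b2,a1',a2',b1',b2'}. ?S3 y \<in> {a1,a2,b1,b2,a1',a2',b1',b2'}" using S3 by auto
  have SX1: "\<forall>y\<in>{a1,a2,b1,b2,a1',a2',b1',b2'}. ?S y \<in> {a1,a2,b1,b2,a1',a2',b1',b2'}" using S by auto
  have rX: "\<forall>y\<in>{a1,a2,b1,b2,p,n}. ?r y \<in> {a1,a2,b1,b2,p,n}" using t_vals by auto
  have d: "p \<notin> I0" "n \<notin> I0" "a1' \<notin> I0" "a2' \<notin> I0" "b1' \<notin> I0" "b2' \<notin> I0" by (rule notI0[OF na])+
  have dd: "a1 \<noteq> a2" "a1 \<noteq> b1" "a1 \<noteq> b2" "a2 \<noteq> b1" "a2 \<noteq> b2" "b1 \<noteq> b2"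
    "a2 \<noteq> a1" "b1 \<noteq> a1" "b2 \<noteq> a1" "b1 \<noteq> a2" "b2 \<noteq> a2" "b2 \<noteq> b1"
    using dall by auto
  define f where "f = (\<lambda>y. if y = a1 then p else if y = a2 then p else if y = b1 then p else if y = b2 then n else y)"
  have fI: "f a1 = p" "f a2 = p" "f b1 = p" "f b2 = n" unfolding f_def using dd by auto
  have fO: "\<And>y. y \<notin> I0 \<Longrightarrow> f y = y" unfolding f_def I0_def by auto
  have fv: "f p = p" "f n = n" "f a1' = a1'" "f a2' = a2'" "f b1' = b1'" "f b2' = b2'"
    using fO d by auto
  have S3inv: "\<forall>u\<in>F. ?S3 u \<in> F \<and> ?S3 (?S3 u) = u" by (rule Sinv)
  show ?thesis
  proof (rule proj_gen[OF F0_sub])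
    show "\<forall>y\<in>F. f y \<in> F0"
    proof
      fix y assume y: "y \<in> F"
      show "f y \<in> F0"
      proof (cases "y \<in> I0")
        case True then have "y = a1 \<or> y = a2 \<or> y = b1 \<or> y = b2" unfolding I0_def by auto
        then show ?thesis using fI inF0[OF na] by auto
      next
        case False then show ?thesis using fO y unfolding F0_def by auto
      qed
    qed
    show "\<forall>y\<in>F0. f y = y" using fO unfolding F0_def by auto
    show "\<forall>u\<in>F. f u = f (?S3 u) \<or> (f u, f (?S3 u)) \<in> ?Q"
    proof
      fix u assume u: "u \<in> F"
      show "f u = f (?S3 u) \<or> (f u, f (?S3 u)) \<in> ?Q"
      proof (cases "u \<in> {a1,a2,b1,b2,a1',a2',b1',b2'}")
        case True
        then show ?thesis by (elim insertE) (simp_all add: S3 fI fv Mrel_vals)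
      next
        case False
        then have n1: "?S3 u \<notin> {a1,a2,b1,b2,a1',a2',b1',b2'}" using inv_back[OF S3inv u _ SX] by blast
        have "?S3 u = ?S u" using S3_eq u False by blast
        then have "(u, ?S3 u) \<in> Kp phi" using Kin[of u "?S3 u"] u False n1 unfolding I0_def by auto
        then show ?thesis using False n1 fO unfolding I0_def by auto
      qed
    qed
    show "\<forall>u\<in>F. f u = f (?r u) \<or> (f u, f (?r u)) \<in> ?Q"
    proof
      fix u assume u: "u \<in> F"
      show "f u = f (?r u) \<or> (f u, f (?r u)) \<in> ?Q"
      proof (cases "u \<in> {a1,a2,b1,b2,p,n}")
        case True
        then show ?thesis by (elim insertE) (simp_all add: t_vals fI fv Mrel_vals)
      next
        case False
        then have n1: "?r u \<notin> {a1,a2,b1,b2,p,n}" using inv_back[OF rinv u _ rX] by blast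
        then have "(u, ?r u) \<in> Kp phi" using Kin u False unfolding I0_def by blast
        then show ?thesis using False n1 fO unfolding I0_def by auto
      qed
    qed
    show "?Q \<subseteq> ?R\<^sup>*"
    proof -
      have e: "(p,a1) \<in> ?R" "(a1,a2) \<in> ?R" "(a2,b1) \<in> ?R" "(b1,b2) \<in> ?R" "(b2,n) \<in> ?R"
        "(n,b2) \<in> ?R" "(b2,b1) \<in> ?R" "(b1,a2) \<in> ?R" "(a2,a1) \<in> ?R" "(a1,p) \<in> ?R"
        "(a1',a2') \<in> ?R" "(a2',a1') \<in> ?R" "(b1',b2') \<in> ?R" "(b2',b1') \<in> ?R"
        unfolding gen_rel2 using inF t_vals S3 by auto
      have M: "Mrel m3 \<subseteq> ?R\<^sup>*" unfolding Mrel_vals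
        using path5[OF e(1-5)] path5[OF e(6-10)] e(11-14) by auto
      have K: "Kp phi \<subseteq> ?R"
      proof
        fix e assume e: "e \<in> Kp phi"
        then obtain u v where uv: "e = (u,v)" "u \<in> F0" "v \<in> F0" "u \<in> F" "v = ?S u \<or> v = ?r u"
          unfolding Kp_def gen_rel2 by auto
        show "e \<in> ?R"
        proof (cases "v = ?S u")
          case True
          have "u \<notin> {a1,a2,b1,b2,a1',a2',b1',b2'}"
          proof
            assume "u \<in> {a1,a2,b1,b2,a1',a2',b1',b2'}"
            then have "u \<in> I0 \<or> v \<in> I0" using True S unfolding I0_def by auto
            then show False using uv unfolding F0_def by auto
          qed
          then have "v = ?S3 u" using True S3_eq uv by auto
          then show ?thesis using uv by (auto simp: gen_rel2)
        next
          case False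
          then have vr: "v = ?r u" using uv by auto
          then show ?thesis using uv by (auto simp: gen_rel2)
        qed
      qed
      show ?thesis using M K by auto
    qed
    show "\<forall>y\<in>F. (y, f y) \<in> ?R\<^sup>* \<and> (f y, y) \<in> ?R\<^sup>*"
    proof
      fix y assume y: "y \<in> F"
      have e: "(a1, p) \<in> ?R" "(p, a1) \<in> ?R" "(a2, a1) \<in> ?R" "(a1, a2) \<in> ?R"
        "(b1, a2) \<in> ?R" "(a2, b1) \<in> ?R" "(b2, n) \<in> ?R" "(n, b2) \<in> ?R"
        unfolding gen_rel2 using inF t_vals S3 by auto
      have a2p: "(a2, p) \<in> ?R\<^sup>*" "(p, a2) \<in> ?R\<^sup>*" using path2[OF e(3,1)] path2[OF e(2,4)] by auto
      have b1p: "(b1, p) \<in> ?R\<^sup>*" "(p, b1) \<in> ?R\<^sup>*" using path3[OF e(5,3,1)] path3[OF e(2,4,6)] by auto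
      show "(y, f y) \<in> ?R\<^sup>* \<and> (f y, y) \<in> ?R\<^sup>*"
      proof (cases "y \<in> I0")
        case True
        then show ?thesis using fI pair_rt[OF e(1,2)] a2p b1p pair_rt[OF e(7,8)]
          unfolding I0_def by auto
      next
        case False then show ?thesis using fO by simp
      qed
    qed
  qed
qed

end

context RS begin

lemma finF: "finite F" using rg unfolding ribbon_graph_def by (rule conjunct1)

lemma symK: "sym (Kp phi)"
proof -
  have "sym (gen_rel F [sub_r0 G phi, r1 G])" by (rule sym_gen_rel2[OF Sinv rinv])
  then show ?thesis unfolding Kp_def sym_def by auto
qed

lemma vert_cases: "vert l \<in> {p,n} \<union> {a1',a2',b1',b2'}"
  unfolding vert_def by (cases l) auto

lemma vertF0: assumes "n \<noteq> a1" shows "vert l \<in> F0"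
  using inF0[OF assms] unfolding vert_def by (cases l) auto

lemma comp_count:
  assumes aphi: "a \<in> phi" and bphi: "b \<in> phi" and na: "n \<noteq> a1" and v: "v \<in> F0"
    and C_def: "C = {y \<in> F0. (v,y) \<in> (Kp phi)\<^sup>*}"
  shows "card (C \<inter> {p,n}) + card (C \<inter> {a1',a2',b1',b2'}) \<le> 2"
        "even (card (C \<inter> {p,n}) + card (C \<inter> {a1',a2',b1',b2'}))"
proof -
  let ?S = "sub_r0 G phi" and ?r = "r1 G" and ?K = "Kp phi"
  have S: "?S a1 = a1'" "?S a1' = a1" "?S a2 = a2'" "?S a2' = a2"
    "?S b1 = b1'" "?S b1' = b1" "?S b2 = b2'" "?S b2' = b2"
    using s_a_in[OF aphi] s_b_in[OF bphi] by auto
  define Cs where "Cs = {y \<in> C. ?S y \<in> F0}"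
  define Ct where "Ct = {y \<in> C. ?r y \<in> F0}"
  have CF0: "C \<subseteq> F0" unfolding C_def by auto
  have finC: "finite C" by (rule finite_subset[OF subset_trans[OF CF0 F0_sub] finF])
  have KC: "u \<in> C \<Longrightarrow> (u,w) \<in> ?K \<Longrightarrow> w \<in> C" for u w
  proof -
    assume u: "u \<in> C" and uw: "(u,w) \<in> ?K"
    have "w \<in> F0" using uw unfolding Kp_def by auto
    moreover have "(v,u) \<in> ?K\<^sup>*" using u unfolding C_def by simp
    then have "(v,w) \<in> ?K\<^sup>*" using uw by (rule rtrancl_into_rtrancl)
    ultimately show "w \<in> C" unfolding C_def by simp
  qed
  have invs: "\<forall>y\<in>Cs. ?S y \<in> Cs \<and> ?S (?S y) = y \<and> ?S y \<noteq> y"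
  proof
    fix y assume y: "y \<in> Cs"
    then have yF: "y \<in> F" "y \<in> C" "?S y \<in> F0" "y \<in> F0" using CF0 F0_sub unfolding Cs_def by auto
    have "(y, ?S y) \<in> ?K" using yF unfolding Kp_def gen_rel2 by auto
    then have "?S y \<in> C" using KC yF by blast
    then show "?S y \<in> Cs \<and> ?S (?S y) = y \<and> ?S y \<noteq> y" using sub_r0_inv[OF rg yF(1)] yF unfolding Cs_def by auto
  qed
  have invt: "\<forall>y\<in>Ct. ?r y \<in> Ct \<and> ?r (?r y) = y \<and> ?r y \<noteq> y"
  proof
    fix y assume y: "y \<in> Ct"
    then have yF: "y \<in> F" "y \<in> C" "?r y \<in> F0" "y \<in> F0" using CF0 F0_sub unfolding Ct_def by auto
    have "(y, ?r y) \<in> ?K" using yF unfolding Kp_def gen_rel2 by auto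
    then have "?r y \<in> C" using KC yF by blast
    then show "?r y \<in> Ct \<and> ?r (?r y) = y \<and> ?r y \<noteq> y" using rg_basic[OF rg yF(1)] yF unfolding Ct_def by auto
  qed
  let ?E = "(\<lambda>x. {x, ?S x}) ` Cs \<union> (\<lambda>x. {x, ?r x}) ` Ct"
  have reach: "(v, y) \<in> (erel ?E)\<^sup>*" if "(v,y) \<in> ?K\<^sup>*" for y
    using that
  proof (induction rule: rtrancl_induct)
    case base then show ?case by simp
  next
    case (step u w)
    have "u \<in> F0" using step.hyps(2) unfolding Kp_def by auto
    then have uC: "u \<in> C" using step.hyps(1) unfolding C_def by simp
    have "(u,w) \<in> erel ?E"
    proof -
      from step.hyps(2) have uw: "u \<in> F" "w \<in> F0" "u \<in> F0" "w = ?S u \<or> w = ?r u" unfolding Kp_def gen_rel2 by auto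
      then show ?thesis
      proof (cases "w = ?S u")
        case True then have "u \<in> Cs" using uC uw unfolding Cs_def by auto
        then have "{u, w} \<in> ?E" using True by blast
        then show ?thesis unfolding erel_def by auto
      next
        case False then have "w = ?r u" using uw by auto
        then have "u \<in> Ct" using uC uw unfolding Ct_def by auto
        then have "{u, w} \<in> ?E" using \<open>w = ?r u\<close> by blast
        then show ?thesis unfolding erel_def by auto
      qed
    qed
    then show ?case using step.IH by (rule rtrancl_into_rtrancl[rotated])
  qed
  have cn: "conn C (erel ?E)" unfolding conn_def
  proof (intro ballI)
    fix y z assume "y \<in> C" "z \<in> C"
    then have "(v,y) \<in> (erel ?E)\<^sup>*" "(v,z) \<in> (erel ?E)\<^sup>*" using reach unfolding C_def by auto
    moreover have "sym ((erel ?E)\<^sup>*)" by (rule sym_rtrancl[OF sym_erel])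
    ultimately have "(y,v) \<in> (erel ?E)\<^sup>*" "(v,z) \<in> (erel ?E)\<^sup>*" by (auto dest: symD)
    then show "(y,z) \<in> (erel ?E)\<^sup>*" by (rule rtrancl_trans)
  qed
  have sb: "2 * card C \<le> card Cs + card Ct + 2" "even (card Cs)" "even (card Ct)"
    using stub_bound[OF finC _ _ invs invt cn] unfolding Cs_def Ct_def by auto
  have CDs: "C - Cs = C \<inter> {a1',a2',b1',b2'}"
  proof -
    have "y \<in> F0 \<Longrightarrow> (?S y \<notin> F0 \<longleftrightarrow> y \<in> {a1',a2',b1',b2'})" for y
    proof -
      assume y: "y \<in> F0"
      then have yF: "y \<in> F" using F0_sub by auto
      show ?thesis
      proof
        assume "?S y \<notin> F0"
        then have "?S y \<in> I0" using sub_r0_inv[OF rg yF] unfolding F0_def by auto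
        then have "y = ?S (?S y) \<and> ?S y \<in> {a1,a2,b1,b2}" using sub_r0_inv[OF rg yF] unfolding I0_def by auto
        then show "y \<in> {a1',a2',b1',b2'}" using S by auto
      next
        assume "y \<in> {a1',a2',b1',b2'}"
        then show "?S y \<notin> F0" using S unfolding F0_def I0_def by auto
      qed
    qed
    then show ?thesis using CF0 unfolding Cs_def by auto
  qed
  have CDt: "C - Ct = C \<inter> {p,n}"
  proof -
    have "y \<in> F0 \<Longrightarrow> (?r y \<notin> F0 \<longleftrightarrow> y \<in> {p,n})" for y
    proof -
      assume y: "y \<in> F0"
      then have yF: "y \<in> F" using F0_sub by auto
      show ?thesis
      proof
        assume "?r y \<notin> F0"
        then have "?r y \<in> I0" using rg_basic[OF rg yF] unfolding F0_def by auto
        then have "y = ?r (?r y) \<and> ?r y \<in> {a1,a2,b1,b2}" using rg_basic[OF rg yF] unfolding I0_def by auto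
        then have "y \<in> {p, b1, a2, n}" using t_vals by auto
        then show "y \<in> {p,n}" using y unfolding F0_def I0_def by auto
      next
        assume "y \<in> {p,n}"
        then show "?r y \<notin> F0" using t_vals unfolding F0_def I0_def by auto
      qed
    qed
    then show ?thesis using CF0 unfolding Ct_def by auto
  qed
  have CsC: "Cs \<subseteq> C" "Ct \<subseteq> C" unfolding Cs_def Ct_def by auto
  have fCs: "finite Cs" "finite Ct" using CsC finC finite_subset by auto
  have c1: "card C = card Cs + card (C \<inter> {a1',a2',b1',b2'})"
  proof -
    have "card (C - Cs) = card C - card Cs" by (rule card_Diff_subset[OF fCs(1) CsC(1)])
    moreover have "card Cs \<le> card C" by (rule card_mono[OF finC CsC(1)])
    ultimately show ?thesis using CDs by simp
  qed
  have c2: "card C = card Ct + card (C \<inter> {p,n})"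
  proof -
    have "card (C - Ct) = card C - card Ct" by (rule card_Diff_subset[OF fCs(2) CsC(2)])
    moreover have "card Ct \<le> card C" by (rule card_mono[OF finC CsC(2)])
    ultimately show ?thesis using CDt by simp
  qed
  show "card (C \<inter> {p,n}) + card (C \<inter> {a1',a2',b1',b2'}) \<le> 2" using sb c1 c2 by simp
  show "even (card (C \<inter> {p,n}) + card (C \<inter> {a1',a2',b1',b2'}))" using sb c1 c2
    by (metis add.commute even_add)
qed

end

context RS begin

lemma lab_card:
  assumes na: "n \<noteq> a1"
  shows "card {l. vert l \<in> C} = card (C \<inter> {p,n}) + card (C \<inter> {a1',a2',b1',b2'})"
proof -
  define T1 where "T1 = {l \<in> {LP,LN}. vert l \<in> C}"
  define T2 where "T2 = {l \<in> {LA1,LA2,LB1,LB2}. vert l \<in> C}"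
  have U: "{l. vert l \<in> C} = T1 \<union> T2" unfolding T1_def T2_def using UNIV_lab by auto
  have disj: "T1 \<inter> T2 = {}" unfolding T1_def T2_def by auto
  have fin: "finite T1" "finite T2" unfolding T1_def T2_def by auto
  have pn: "p \<noteq> n" using main_d[OF na] by auto
  have i1: "inj_on vert T1" unfolding T1_def inj_on_def vert_def using pn by auto
  have i2: "inj_on vert T2" unfolding T2_def inj_on_def vert_def using dall by auto
  have im1: "vert ` T1 = C \<inter> {p,n}"
  proof
    show "vert ` T1 \<subseteq> C \<inter> {p,n}" unfolding T1_def vert_def by auto
    show "C \<inter> {p,n} \<subseteq> vert ` T1"
    proof
      fix z assume "z \<in> C \<inter> {p,n}"
      then have "z = vert LP \<and> LP \<in> T1 \<or> z = vert LN \<and> LN \<in> T1" unfolding T1_def vert_def by auto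
      then show "z \<in> vert ` T1" by blast
    qed
  qed
  have im2: "vert ` T2 = C \<inter> {a1',a2',b1',b2'}"
  proof
    show "vert ` T2 \<subseteq> C \<inter> {a1',a2',b1',b2'}" unfolding T2_def vert_def by auto
    show "C \<inter> {a1',a2',b1',b2'} \<subseteq> vert ` T2"
    proof
      fix z assume "z \<in> C \<inter> {a1',a2',b1',b2'}"
      then have "z = vert LA1 \<and> LA1 \<in> T2 \<or> z = vert LA2 \<and> LA2 \<in> T2 \<or> z = vert LB1 \<and> LB1 \<in> T2 \<or> z = vert LB2 \<and> LB2 \<in> T2"
        unfolding T2_def vert_def by auto
      then show "z \<in> vert ` T2" by blast
    qed
  qed
  have "card {l. vert l \<in> C} = card T1 + card T2" unfolding U using card_Un_disjoint[OF fin disj] .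
  also have "card T1 = card (C \<inter> {p,n})" using card_image[OF i1] im1 by simp
  also have "card T2 = card (C \<inter> {a1',a2',b1',b2'})" using card_image[OF i2] im2 by simp
  finally show ?thesis .
qed

lemma pi_exists:
  assumes aphi: "a \<in> phi" and bphi: "b \<in> phi" and na: "n \<noteq> a1"
  shows "\<exists>\<pi>. (\<forall>l. \<pi> l \<noteq> l \<and> \<pi> (\<pi> l) = l) \<and>
     (\<forall>l l'. (vert l, vert l') \<in> (Kp phi)\<^sup>* \<longleftrightarrow> (l' = l \<or> l' = \<pi> l))"
proof -
  let ?K = "Kp phi"
  define SL where "SL l = {l'. (vert l, vert l') \<in> ?K\<^sup>*}" for l
  have symKs: "sym (?K\<^sup>*)" by (rule sym_rtrancl[OF symK])
  have c2: "card (SL l) = 2" for l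
  proof -
    define C where "C = {y \<in> F0. (vert l, y) \<in> ?K\<^sup>*}"
    have cc: "card (C \<inter> {p,n}) + card (C \<inter> {a1',a2',b1',b2'}) \<le> 2"
        "even (card (C \<inter> {p,n}) + card (C \<inter> {a1',a2',b1',b2'}))"
      using comp_count[OF aphi bphi na vertF0[OF na] C_def] by auto
    have SLe: "SL l = {l'. vert l' \<in> C}" unfolding SL_def C_def using vertF0[OF na] by auto
    have "l \<in> SL l" unfolding SL_def by simp
    then have "SL l \<noteq> {}" by auto
    moreover have "finite (SL l)" by (rule finite_subset[OF subset_UNIV finite_lab])
    ultimately have "card (SL l) \<ge> 1" by (simp add: Suc_le_eq card_gt_0_iff)
    moreover have "card (SL l) \<le> 2" "even (card (SL l))" using cc SLe lab_card[OF na] by auto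
    ultimately show ?thesis by presburger
  qed
  have other: "\<exists>l'. l' \<in> SL l \<and> l' \<noteq> l" for l
  proof -
    obtain u w where uw: "SL l = {u,w}" "u \<noteq> w" using c2[of l] by (meson card_2_iff)
    then show ?thesis by blast
  qed
  define \<pi> where "\<pi> l = (SOME l'. l' \<in> SL l \<and> l' \<noteq> l)" for l
  have pi1: "\<pi> l \<in> SL l \<and> \<pi> l \<noteq> l" for l
    unfolding \<pi>_def using someI_ex[OF other[of l]] .
  have SLeq: "SL l = {l, \<pi> l}" for l
  proof -
    have sub: "{l, \<pi> l} \<subseteq> SL l" using pi1[of l] unfolding SL_def by auto
    have "card {l, \<pi> l} = 2" using pi1[of l] by auto
    moreover have "finite (SL l)" by (rule finite_subset[OF subset_UNIV finite_lab])
    ultimately show ?thesis using card_subset_eq[OF _ sub] c2[of l] by simp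
  qed
  have SLsame: "SL (\<pi> l) = SL l" for l
  proof -
    have e: "(vert l, vert (\<pi> l)) \<in> ?K\<^sup>*" using pi1[of l] unfolding SL_def by simp
    have e': "(vert (\<pi> l), vert l) \<in> ?K\<^sup>*" using e symKs by (meson symD)
    show ?thesis
    proof
      show "SL (\<pi> l) \<subseteq> SL l"
      proof
        fix z assume "z \<in> SL (\<pi> l)"
        then have "(vert (\<pi> l), vert z) \<in> ?K\<^sup>*" unfolding SL_def by simp
        then have "(vert l, vert z) \<in> ?K\<^sup>*" by (rule rtrancl_trans[OF e])
        then show "z \<in> SL l" unfolding SL_def by simp
      qed
      show "SL l \<subseteq> SL (\<pi> l)"
      proof
        fix z assume "z \<in> SL l"
        then have "(vert l, vert z) \<in> ?K\<^sup>*" unfolding SL_def by simp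
        then have "(vert (\<pi> l), vert z) \<in> ?K\<^sup>*" by (rule rtrancl_trans[OF e'])
        then show "z \<in> SL (\<pi> l)" unfolding SL_def by simp
      qed
    qed
  qed
  have pi2: "\<pi> (\<pi> l) = l" for l
  proof -
    have "\<pi> (\<pi> l) \<in> SL (\<pi> l)" "\<pi> (\<pi> l) \<noteq> \<pi> l" using pi1[of "\<pi> l"] by auto
    then show ?thesis using SLsame[of l] SLeq[of l] by auto
  qed
  show ?thesis
  proof (intro exI conjI allI)
    fix l show "\<pi> l \<noteq> l" using pi1 by blast
    show "\<pi> (\<pi> l) = l" by (rule pi2)
  next
    fix l l'
    show "(vert l, vert l') \<in> ?K\<^sup>* \<longleftrightarrow> (l' = l \<or> l' = \<pi> l)"
      using SLeq[of l] unfolding SL_def by auto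
  qed
qed

end

context RS begin

lemma case_ab_in:
  assumes aphi: "a \<in> phi" and bphi: "b \<in> phi" and na: "n \<noteq> a1"
  shows "conn F (gen_rel F [sub_r0 G phi, exchange_r1 G x]) \<longleftrightarrow>
    (conn F (gen_rel F [sub_r0 G phi, r1 G]) \<noteq> conn F (gen_rel F [sub_r0 G (phi - {a,b}), r1 G]))"
proof -
  obtain \<pi> where pi: "\<forall>l. \<pi> l \<noteq> l \<and> \<pi> (\<pi> l) = l"
    and piK: "\<forall>l l'. (vert l, vert l') \<in> (Kp phi)\<^sup>* \<longleftrightarrow> (l' = l \<or> l' = \<pi> l)"
    using pi_exists[OF aphi bphi na] by blast
  have MM: "{(vert l, vert (m l)) | l. True} = Mrel m" for m unfolding Mrel_def by auto
  have vF: "\<forall>l. vert l \<in> F0" using vertF0[OF na] by blast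
  have km: "conn F0 (Kp phi \<union> Mrel m) \<longleftrightarrow> (\<forall>v\<in>F0. \<exists>l. (v, vert l) \<in> (Kp phi)\<^sup>*) \<and> (\<forall>l. m l \<noteq> \<pi> l)"
    if m: "\<forall>l. m l \<noteq> l \<and> m (m l) = l" for m
    using KM_conn[OF symK vF pi m piK] unfolding MM .
  have e1: "conn F (gen_rel F [sub_r0 G phi, r1 G]) \<longleftrightarrow> (\<forall>v\<in>F0. \<exists>l. (v, vert l) \<in> (Kp phi)\<^sup>*) \<and> (\<forall>l. m1 l \<noteq> \<pi> l)"
    using conf1[OF aphi bphi na] km[OF m_inv(1)] by simp
  have e2: "conn F (gen_rel F [sub_r0 G phi, exchange_r1 G x]) \<longleftrightarrow> (\<forall>v\<in>F0. \<exists>l. (v, vert l) \<in> (Kp phi)\<^sup>*) \<and> (\<forall>l. m2 l \<noteq> \<pi> l)"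
    using conf2[OF aphi bphi na] km[OF m_inv(2)] by simp
  have e3: "conn F (gen_rel F [sub_r0 G (phi - {a,b}), r1 G]) \<longleftrightarrow> (\<forall>v\<in>F0. \<exists>l. (v, vert l) \<in> (Kp phi)\<^sup>*) \<and> (\<forall>l. m3 l \<noteq> \<pi> l)"
    using conf3[OF aphi bphi na] km[OF m_inv(3)] by simp
  show ?thesis using e1 e2 e3 xor_check[OF pi] by blast
qed

lemma case_deg:
  assumes aphi: "a \<in> phi" and bphi: "b \<in> phi" and na: "n = a1"
  shows "\<not> conn F (gen_rel F [sub_r0 G (phi - {a,b}), r1 G])"
proof
  let ?S3 = "sub_r0 G (phi - {a,b})" and ?r = "r1 G"
  let ?R = "gen_rel F [?S3, ?r]"
  assume c: "conn F ?R"
  have an: "a \<notin> phi - {a,b}" "b \<notin> phi - {a,b}" by auto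
  have S3: "?S3 a1 = a2" "?S3 a2 = a1" "?S3 b1 = b2" "?S3 b2 = b1"
    using s_a_out[OF an(1)] s_b_out[OF an(2)] by auto
  have pb: "p = b2" using pn_dist(7) na by simp
  have X: "y \<in> {a1,a2,b1,b2}" if "(a1, y) \<in> ?R\<^sup>*" for y
    using that
  proof (induction rule: rtrancl_induct)
    case base then show ?case by simp
  next
    case (step u w)
    then have "w = ?S3 u \<or> w = ?r u" unfolding gen_rel2 by auto
    then show ?case using step.IH S3 t_vals pb na by auto
  qed
  have "(a1, a1') \<in> ?R\<^sup>*" using c inF unfolding conn_def by blast
  then have "a1' \<in> {a1,a2,b1,b2}" by (rule X)
  then show False using dall by auto
qed

end

definition dm_formula :: "'e set \<Rightarrow> 'e set set \<Rightarrow> 'e \<Rightarrow> 'e \<Rightarrow> 'e set set" where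
  "dm_formula E P a b = {c. c \<subseteq> E \<and> ((c \<in> P) \<noteq> (a \<in> c \<and> b \<in> c \<and> c - {a,b} \<in> P))}"

lemma symdiff_b_inv: "symdiff (symdiff c {b}) {b} = c"
  unfolding symdiff_def by auto

lemma image_tau: "c \<in> (\<lambda>phi. symdiff phi {b}) ` X \<longleftrightarrow> symdiff c {b} \<in> X"
proof
  assume "c \<in> (\<lambda>phi. symdiff phi {b}) ` X"
  then obtain d where "d \<in> X" "c = symdiff d {b}" by blast
  then show "symdiff c {b} \<in> X" using symdiff_b_inv by metis
next
  assume "symdiff c {b} \<in> X"
  then show "c \<in> (\<lambda>phi. symdiff phi {b}) ` X" using symdiff_b_inv[of c b] by (metis image_eqI)
qed

lemma Dprime_formula:
  assumes PE: "\<forall>c\<in>P. c \<subseteq> E" and aE: "a \<in> E" and bE: "b \<in> E" and ab: "a \<noteq> b"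
  shows "Dprime (E, P) a b = (E, dm_formula E P a b)"
proof -
  let ?tau = "\<lambda>phi. symdiff phi {b}"
  define P1 where "P1 = ?tau ` P"
  define S where "S = {phi \<union> {a} | phi. phi \<subseteq> E - {a, b} \<and> phi \<union> {b} \<in> P1}"
  have D: "Dprime (E, P) a b = (E, ?tau ` (symdiff P1 S))"
    unfolding Dprime_def twist_def slide_def P1_def S_def by simp
  have memS: "d \<in> S \<longleftrightarrow> a \<in> d \<and> b \<notin> d \<and> d - {a} \<subseteq> E - {a,b} \<and> d - {a} \<in> P" for d
  proof
    assume "d \<in> S"
    then obtain psi where psi: "d = psi \<union> {a}" "psi \<subseteq> E - {a,b}" "psi \<union> {b} \<in> P1" unfolding S_def by blast
    have "?tau (psi \<union> {b}) = psi" using psi(2) unfolding symdiff_def by auto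
    then have "psi \<in> P" using psi(3) image_tau[of "psi \<union> {b}" b P] unfolding P1_def by simp
    moreover have "d - {a} = psi" using psi(1,2) by auto
    ultimately show "a \<in> d \<and> b \<notin> d \<and> d - {a} \<subseteq> E - {a,b} \<and> d - {a} \<in> P" using psi ab by auto
  next
    assume h: "a \<in> d \<and> b \<notin> d \<and> d - {a} \<subseteq> E - {a,b} \<and> d - {a} \<in> P"
    let ?psi = "d - {a}"
    have "?tau (?psi \<union> {b}) = ?psi" using h unfolding symdiff_def by auto
    then have "?psi \<union> {b} \<in> P1" using h image_tau[of "?psi \<union> {b}" b P] unfolding P1_def by simp
    moreover have "d = ?psi \<union> {a}" using h by auto
    ultimately show "d \<in> S" using h unfolding S_def by blast
  qed
  have "c \<in> ?tau ` (symdiff P1 S) \<longleftrightarrow> c \<in> dm_formula E P a b" for c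
  proof -
    have "c \<in> ?tau ` (symdiff P1 S) \<longleftrightarrow> ?tau c \<in> symdiff P1 S" by (rule image_tau)
    also have "\<dots> \<longleftrightarrow> (?tau c \<in> P1) \<noteq> (?tau c \<in> S)" unfolding symdiff_def by auto
    also have "(?tau c \<in> P1) \<longleftrightarrow> c \<in> P" unfolding P1_def image_tau symdiff_b_inv ..
    also have "(?tau c \<in> S) \<longleftrightarrow> (a \<in> c \<and> b \<in> c \<and> c - {a,b} \<subseteq> E \<and> c - {a,b} \<in> P)"
    proof -
      have "?tau c \<in> S \<longleftrightarrow> a \<in> ?tau c \<and> b \<notin> ?tau c \<and> ?tau c - {a} \<subseteq> E - {a,b} \<and> ?tau c - {a} \<in> P"
        by (rule memS)
      moreover have "b \<notin> ?tau c \<longleftrightarrow> b \<in> c" unfolding symdiff_def by auto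
      moreover have "b \<in> c \<Longrightarrow> ?tau c - {a} = c - {a,b}" unfolding symdiff_def by auto
      moreover have "b \<in> c \<Longrightarrow> a \<in> ?tau c \<longleftrightarrow> a \<in> c" unfolding symdiff_def using ab by auto
      ultimately show ?thesis by auto
    qed
    finally show ?thesis unfolding dm_formula_def using PE aE bE by blast
  qed
  then show ?thesis using D by auto
qed


context RS begin

lemma G'_facts:
  "flags (exchange_ends G x) = F" "sub_r0 (exchange_ends G x) phi = sub_r0 G phi"
  "r1 (exchange_ends G x) = exchange_r1 G x" "edges (exchange_ends G x) = edges G"
proof -
  have e: "edge_of (exchange_ends G x) = edge_of G"
    by (rule ext) (simp add: edge_of_def exchange_ends_def)
  show "flags (exchange_ends G x) = F" by (simp add: exchange_ends_def)
  show "sub_r0 (exchange_ends G x) phi = sub_r0 G phi"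
    by (rule ext) (simp only: sub_r0_def e, simp add: exchange_ends_def)
  show "r1 (exchange_ends G x) = exchange_r1 G x" by (simp add: exchange_ends_def)
  show "edges (exchange_ends G x) = edges G" unfolding edges_def e by (simp add: exchange_ends_def)
qed

lemma Fne: "F \<noteq> {}" using xF by auto

lemma main_char:
  "(num_boundary_components (exchange_ends G x) c = 1) \<longleftrightarrow>
   ((num_boundary_components G c = 1) \<noteq>
    (a \<in> c \<and> b \<in> c \<and> num_boundary_components G (c - {a,b}) = 1))"
proof -
  have l: "num_boundary_components (exchange_ends G x) c = 1 \<longleftrightarrow>
     conn F (gen_rel F [sub_r0 G c, exchange_r1 G x])"
    using nbc_conn[of "exchange_ends G x" c] G'_facts Fne by simp
  have r1: "num_boundary_components G c = 1 \<longleftrightarrow> conn F (gen_rel F [sub_r0 G c, r1 G])"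
    using nbc_conn[OF Fne] by blast
  have r3: "num_boundary_components G (c - {a,b}) = 1 \<longleftrightarrow> conn F (gen_rel F [sub_r0 G (c - {a,b}), r1 G])"
    using nbc_conn[OF Fne] by blast
  show ?thesis
  proof (cases "a \<in> c \<and> b \<in> c")
    case True
    show ?thesis
    proof (cases "n = a1")
      case True
      then have "exchange_r1 G x = r1 G" by (rule ex_deg)
      then show ?thesis using l r1 r3 case_deg[OF _ _ True] \<open>a \<in> c \<and> b \<in> c\<close> by auto
    next
      case False
      then show ?thesis using l r1 r3 case_ab_in[OF _ _ False] \<open>a \<in> c \<and> b \<in> c\<close> by auto
    qed
  next
    case False
    have "conn F (gen_rel F [sub_r0 G c, exchange_r1 G x]) \<longleftrightarrow> conn F (gen_rel F [sub_r0 G c, r1 G])"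
    proof (cases "n = a1")
      case True
      then have "exchange_r1 G x = r1 G" by (rule ex_deg)
      then show ?thesis by simp
    next
      case na: False
      show ?thesis
      proof (cases "a \<in> c")
        case True then have "b \<notin> c" using False by auto
        then show ?thesis using case_b_out[OF _ na] by blast
      next
        case False then show ?thesis using case_a_out[OF _ na] by blast
      qed
    qed
    then show ?thesis using l r1 False by auto
  qed
qed

end

theorem theorem4p3:
  fixes G :: "'f rmap" and a b :: "'f set" and x :: 'f
  assumes "ribbon_graph G"
    and "a \<in> edges G" and "b \<in> edges G" and "a \<noteq> b"
    and "x \<in> flags G" and "edge_of G x = a" and "edge_of G (r1 G x) = b"
  shows "delta_matroid_of (exchange_ends G x) = Dprime (delta_matroid_of G) a b"
proof -
  interpret RS G x using assms by unfold_locales auto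
  define P where "P = {phi. phi \<subseteq> edges G \<and> num_boundary_components G phi = 1}"
  have dG: "delta_matroid_of G = (edges G, P)" unfolding delta_matroid_of_def P_def by simp
  have PE: "\<forall>c\<in>P. c \<subseteq> edges G" unfolding P_def by auto
  have D: "Dprime (delta_matroid_of G) a b = (edges G, dm_formula (edges G) P a b)"
    unfolding dG by (rule Dprime_formula[OF PE assms(2,3,4)])
  have mc: "\<And>c. (num_boundary_components (exchange_ends G x) c = 1) \<longleftrightarrow>
   ((num_boundary_components G c = 1) \<noteq>
    (a \<in> c \<and> b \<in> c \<and> num_boundary_components G (c - {a,b}) = 1))"
    using main_char assms(6,7) by blast
  have "{phi. phi \<subseteq> edges G \<and> num_boundary_components (exchange_ends G x) phi = 1} = dm_formula (edges G) P a b"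
  proof (rule set_eqI)
    fix c
    show "c \<in> {phi. phi \<subseteq> edges G \<and> num_boundary_components (exchange_ends G x) phi = 1} \<longleftrightarrow>
          c \<in> dm_formula (edges G) P a b"
    proof (cases "c \<subseteq> edges G")
      case True
      have "c - {a,b} \<subseteq> edges G" using True by auto
      then show ?thesis using True mc[of c] unfolding dm_formula_def P_def by auto
    next
      case False then show ?thesis unfolding dm_formula_def by auto
    qed
  qed
  then have "delta_matroid_of (exchange_ends G x) = (edges G, dm_formula (edges G) P a b)"
    unfolding delta_matroid_of_def G'_facts by simp
  then show ?thesis using D by simp
qed


end
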